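(* Let $\Sigma$ be a Riemann surface, $X$ a holomorphic function on $\Sigma$, and $p_1,\dots,p_N\in\Sigma$ points with $X(p_i)\neq0$ at which $dX$ has a simple zero; let $x=\log X$ locally and $D=X\frac{d}{dX}$. A function $g$ defined and meromorphic in a vicinity of $p_1,\dots,p_N$ belongs to $\hat\Xi$ if and only if for every $i=1,\dots,N$, writing $\nu$ for a local coordinate near $p_i$ with $\nu^2=x-x(p_i)$, the Laurent expansion of $g$ at $p_i$ in $\nu$ has odd principal part.
   Context: $\hat\Xi$ is the subspace of the space of functions defined in a vicinity of $p_1,\dots,p_N$ spanned (finite linear combinations) by $D^jf$, $j\ge0$, for all $f$ holomorphic (regular) at $p_1,\dots,p_N$. *)

theory Defs
  imports "HOL-Complex_Analysis.Complex_Analysis"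
begin

definition complex_chart :: "'a topology \<Rightarrow> ('a set \<times> ('a \<Rightarrow> complex)) \<Rightarrow> bool" where
  "complex_chart T c \<longleftrightarrow>
     (case c of (U, \<phi>) \<Rightarrow> openin T U \<and> open (\<phi> ` U) \<and>
        homeomorphic_map (subtopology T U) (top_of_set (\<phi> ` U)) \<phi>)"

definition holomorphic_atlas :: "'a topology \<Rightarrow> ('a set \<times> ('a \<Rightarrow> complex)) set \<Rightarrow> bool" where
  "holomorphic_atlas T A \<longleftrightarrow>
     (\<forall>c\<in>A. complex_chart T c) \<and>
     topspace T = (\<Union>c\<in>A. fst c) \<and>
     (\<forall>(U, \<phi>)\<in>A. \<forall>(V, \<rho>)\<in>A. (\<rho> \<circ> inv_into U \<phi>) holomorphic_on (\<phi> ` (U \<inter> V)))"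

definition riemann_surface :: "'a topology \<Rightarrow> ('a set \<times> ('a \<Rightarrow> complex)) set \<Rightarrow> bool" where
  "riemann_surface T A \<longleftrightarrow> Hausdorff_space T \<and> connected_space T \<and> holomorphic_atlas T A"

definition chart_at :: "('a set \<times> ('a \<Rightarrow> complex)) set \<Rightarrow> 'a \<Rightarrow> 'a set \<times> ('a \<Rightarrow> complex)" where
  "chart_at A q = (SOME c. c \<in> A \<and> q \<in> fst c)"

definition holo_at :: "('a set \<times> ('a \<Rightarrow> complex)) set \<Rightarrow> ('a \<Rightarrow> complex) \<Rightarrow> 'a \<Rightarrow> bool" where
  "holo_at A f q \<longleftrightarrow> (\<exists>(U, \<phi>)\<in>A. q \<in> U \<and> (f \<circ> inv_into U \<phi>) analytic_on {\<phi> q})"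

definition mero_at :: "('a set \<times> ('a \<Rightarrow> complex)) set \<Rightarrow> ('a \<Rightarrow> complex) \<Rightarrow> 'a \<Rightarrow> bool" where
  "mero_at A f q \<longleftrightarrow> (\<exists>(U, \<phi>)\<in>A. q \<in> U \<and> (f \<circ> inv_into U \<phi>) meromorphic_on {\<phi> q})"

definition dX_simple_zero :: "('a set \<times> ('a \<Rightarrow> complex)) set \<Rightarrow> ('a \<Rightarrow> complex) \<Rightarrow> 'a \<Rightarrow> bool" where
  "dX_simple_zero A X q \<longleftrightarrow>
     (\<exists>(U, \<phi>)\<in>A. q \<in> U \<and> deriv (X \<circ> inv_into U \<phi>) (\<phi> q) = 0 \<and>
        deriv (deriv (X \<circ> inv_into U \<phi>)) (\<phi> q) \<noteq> 0)"

text \<open>The operator D = X d/dX, computed pointwise in a chart: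
  (D f)(q) = X(q) * (f o psi)'(z) / (X o psi)'(z), z = phi q.\<close>

definition Dop :: "('a set \<times> ('a \<Rightarrow> complex)) set \<Rightarrow> ('a \<Rightarrow> complex) \<Rightarrow> ('a \<Rightarrow> complex) \<Rightarrow> 'a \<Rightarrow> complex" where
  "Dop A X f q = (case chart_at A q of (U, \<phi>) \<Rightarrow>
      X q * deriv (f \<circ> inv_into U \<phi>) (\<phi> q) / deriv (X \<circ> inv_into U \<phi>) (\<phi> q))"

definition in_Xi_hat :: "'a topology \<Rightarrow> ('a set \<times> ('a \<Rightarrow> complex)) set \<Rightarrow> ('a \<Rightarrow> complex)
    \<Rightarrow> nat \<Rightarrow> (nat \<Rightarrow> 'a) \<Rightarrow> ('a \<Rightarrow> complex) \<Rightarrow> bool" where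
  "in_Xi_hat T A X N p g \<longleftrightarrow>
     (\<exists>(m::nat) (c::nat \<Rightarrow> complex) (j::nat \<Rightarrow> nat) (f::nat \<Rightarrow> 'a \<Rightarrow> complex).
        (\<forall>k<m. \<forall>i\<in>{1..N}. holo_at A (f k) (p i)) \<and>
        (\<forall>i\<in>{1..N}. \<exists>W. openin T W \<and> p i \<in> W \<and>
            (\<forall>q\<in>W - {p i}. g q = (\<Sum>k<m. c k * (Dop A X ^^ j k) (f k) q))))"

definition local_coordinate :: "'a topology \<Rightarrow> ('a set \<times> ('a \<Rightarrow> complex)) set \<Rightarrow> 'a
    \<Rightarrow> 'a set \<Rightarrow> ('a \<Rightarrow> complex) \<Rightarrow> bool" where
  "local_coordinate T A p W \<nu> \<longleftrightarrow>
     openin T W \<and> p \<in> W \<and> inj_on \<nu> W \<and>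
     (\<forall>q\<in>W. \<exists>(U, \<phi>)\<in>A. q \<in> U \<and> (\<nu> \<circ> inv_into U \<phi>) analytic_on {\<phi> q} \<and>
        deriv (\<nu> \<circ> inv_into U \<phi>) (\<phi> q) \<noteq> 0)"

definition sqrt_log_coordinate :: "('a set \<times> ('a \<Rightarrow> complex)) set \<Rightarrow> ('a \<Rightarrow> complex)
    \<Rightarrow> 'a \<Rightarrow> 'a set \<Rightarrow> ('a \<Rightarrow> complex) \<Rightarrow> bool" where
  "sqrt_log_coordinate A X p W \<nu> \<longleftrightarrow>
     (\<exists>x. (\<forall>q\<in>W. holo_at A x q \<and> exp (x q) = X q) \<and>
          (\<forall>q\<in>W. (\<nu> q)\<^sup>2 = x q - x p))"

definition odd_principal_part :: "complex fls \<Rightarrow> bool" where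
  "odd_principal_part F \<longleftrightarrow> (\<forall>n::int. n < 0 \<and> even n \<longrightarrow> fls_nth F n = 0)"

end

theory Submission
  imports Defs
begin
lemma chart_props:
  assumes "complex_chart T (U, \<phi>)"
  shows "openin T U" "open (\<phi> ` U)" "inj_on \<phi> U" "U \<subseteq> topspace T"
    "continuous_map (subtopology T U) (top_of_set (\<phi> ` U)) \<phi>"
proof -
  have h: "homeomorphic_map (subtopology T U) (top_of_set (\<phi> ` U)) \<phi>"
    and o: "openin T U" "open (\<phi> ` U)" using assms by (auto simp: complex_chart_def)
  show "openin T U" "open (\<phi> ` U)" by fact+
  show U: "U \<subseteq> topspace T" using o openin_subset by blast
  show "inj_on \<phi> U" using homeomorphic_imp_injective_map[OF h] U by (simp add: Int_absorb1)
  show "continuous_map (subtopology T U) (top_of_set (\<phi> ` U)) \<phi>"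
    using h homeomorphic_imp_continuous_map by blast
qed

lemma chart_open_image:
  assumes "complex_chart T (U, \<phi>)" "openin T Ov"
  shows "open (\<phi> ` (U \<inter> Ov))"
proof -
  have h: "homeomorphic_map (subtopology T U) (top_of_set (\<phi> ` U)) \<phi>"
    using assms by (auto simp: complex_chart_def)
  have U: "U \<subseteq> topspace T" using chart_props[OF assms(1)] by auto
  have "openin (subtopology T U) (U \<inter> Ov)"
    using assms(2) openin_subtopology_Int2 by blast
  hence "openin (top_of_set (\<phi> ` U)) (\<phi> ` (U \<inter> Ov))"
    using homeomorphic_map_openness[OF h, of "U \<inter> Ov"] U by auto
  thus ?thesis using chart_props(2)[OF assms(1)] openin_open_trans by blast
qed

lemma chart_open_preimage:
  assumes "complex_chart T (U, \<phi>)" "open Ov"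
  shows "openin T {q\<in>U. \<phi> q \<in> Ov}"
proof -
  have "openin (subtopology T U) {x \<in> topspace (subtopology T U). \<phi> x \<in> \<phi> ` U \<inter> Ov}"
    by (rule openin_continuous_map_preimage[OF chart_props(5)[OF assms(1)]])
       (use assms(2) in \<open>auto simp: openin_open_Int\<close>)
  moreover have "{x \<in> topspace (subtopology T U). \<phi> x \<in> \<phi> ` U \<inter> Ov} = {q\<in>U. \<phi> q \<in> Ov}"
    using chart_props(4)[OF assms(1)] by auto
  ultimately show ?thesis using openin_trans_full chart_props(1)[OF assms(1)] by metis
qed


lemma atlas_chart: "holomorphic_atlas T A \<Longrightarrow> (U, \<phi>) \<in> A \<Longrightarrow> complex_chart T (U, \<phi>)"
  by (simp add: holomorphic_atlas_def)

lemma atlas_trans: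
  "holomorphic_atlas T A \<Longrightarrow> (U, \<phi>) \<in> A \<Longrightarrow> (V, \<rho>) \<in> A \<Longrightarrow>
     (\<rho> \<circ> inv_into U \<phi>) holomorphic_on (\<phi> ` (U \<inter> V))"
proof -
  assume a: "holomorphic_atlas T A" "(U, \<phi>) \<in> A" "(V, \<rho>) \<in> A"
  from a(1) have H: "\<forall>(U, \<phi>)\<in>A. \<forall>(V, \<rho>)\<in>A. (\<rho> \<circ> inv_into U \<phi>) holomorphic_on (\<phi> ` (U \<inter> V))"
    by (simp add: holomorphic_atlas_def)
  from bspec[OF H a(2)] have "\<forall>(V, \<rho>)\<in>A. (\<rho> \<circ> inv_into U \<phi>) holomorphic_on (\<phi> ` (U \<inter> V))" by simp
  from bspec[OF this a(3)] show ?thesis by simp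
qed

lemma chart_at_props:
  assumes "holomorphic_atlas T A" "q \<in> topspace T"
  shows "chart_at A q \<in> A" "q \<in> fst (chart_at A q)"
proof -
  have "\<exists>c. c \<in> A \<and> q \<in> fst c" using assms unfolding holomorphic_atlas_def by blast
  hence "chart_at A q \<in> A \<and> q \<in> fst (chart_at A q)"
    unfolding chart_at_def by (rule someI_ex)
  thus "chart_at A q \<in> A" "q \<in> fst (chart_at A q)" by auto
qed

lemma chart_inv:
  assumes "complex_chart T (U, \<phi>)"
  shows "\<And>q. q \<in> U \<Longrightarrow> inv_into U \<phi> (\<phi> q) = q"
    and "\<And>z. z \<in> \<phi> ` U \<Longrightarrow> inv_into U \<phi> z \<in> U \<and> \<phi> (inv_into U \<phi> z) = z"
  using chart_props(3)[OF assms] by (auto simp: inv_into_into f_inv_into_f)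

lemma trans_facts:
  assumes atl: "holomorphic_atlas T A" and UA: "(U, \<phi>) \<in> A" and VA: "(V, \<rho>) \<in> A"
    and q: "q \<in> U" "q \<in> V"
  shows "open (\<rho> ` (V \<inter> U))" "\<rho> q \<in> \<rho> ` (V \<inter> U)"
    "(\<phi> \<circ> inv_into V \<rho>) holomorphic_on (\<rho> ` (V \<inter> U))"
    "\<And>z. z \<in> \<rho> ` (V \<inter> U) \<Longrightarrow> inv_into V \<rho> z \<in> V \<inter> U \<and> \<rho> (inv_into V \<rho> z) = z"
    "deriv (\<phi> \<circ> inv_into V \<rho>) (\<rho> q) \<noteq> 0"
proof -
  have cU: "complex_chart T (U, \<phi>)" and cV: "complex_chart T (V, \<rho>)"
    using atl UA VA atlas_chart by blast+
  show o: "open (\<rho> ` (V \<inter> U))"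
    using chart_open_image[OF cV chart_props(1)[OF cU]] .
  show rq: "\<rho> q \<in> \<rho> ` (V \<inter> U)" using q by blast
  show hol: "(\<phi> \<circ> inv_into V \<rho>) holomorphic_on (\<rho> ` (V \<inter> U))"
    using atlas_trans[OF atl VA UA] .
  show inv: "\<And>z. z \<in> \<rho> ` (V \<inter> U) \<Longrightarrow> inv_into V \<rho> z \<in> V \<inter> U \<and> \<rho> (inv_into V \<rho> z) = z"
  proof -
    fix z assume "z \<in> \<rho> ` (V \<inter> U)"
    then obtain y where y: "y \<in> V \<inter> U" "z = \<rho> y" by auto
    have "inv_into V \<rho> z = y" using chart_inv(1)[OF cV, of y] y by simp
    thus "inv_into V \<rho> z \<in> V \<inter> U \<and> \<rho> (inv_into V \<rho> z) = z"
      using y by simp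
  qed
  have "inj_on (\<phi> \<circ> inv_into V \<rho>) (\<rho> ` (V \<inter> U))"
  proof (rule inj_onI)
    fix z z' assume z: "z \<in> \<rho> ` (V \<inter> U)" "z' \<in> \<rho> ` (V \<inter> U)"
      and e: "(\<phi> \<circ> inv_into V \<rho>) z = (\<phi> \<circ> inv_into V \<rho>) z'"
    have "inv_into V \<rho> z = inv_into V \<rho> z'"
      using inj_onD[OF chart_props(3)[OF cU] e[unfolded o_def]] inv[OF z(1)] inv[OF z(2)] by blast
    hence "\<rho> (inv_into V \<rho> z) = \<rho> (inv_into V \<rho> z')" by simp
    thus "z = z'" using inv[OF z(1)] inv[OF z(2)] by simp
  qed
  thus "deriv (\<phi> \<circ> inv_into V \<rho>) (\<rho> q) \<noteq> 0"
    using holomorphic_injective_imp_regular[OF hol o _ rq] by blast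
qed

lemma bex_pair: "\<exists>(a, b)\<in>S. P a b \<Longrightarrow> (\<And>a b. (a, b) \<in> S \<Longrightarrow> P a b \<Longrightarrow> thesis) \<Longrightarrow> thesis"
  by auto

lemma holo_at_chart:
  assumes atl: "holomorphic_atlas T A" and h: "holo_at A h q" and VA: "(V, \<rho>) \<in> A" and qV: "q \<in> V"
  shows "(h \<circ> inv_into V \<rho>) analytic_on {\<rho> q}"
proof -
  obtain U \<phi> where UA: "(U, \<phi>) \<in> A" and qU: "q \<in> U" and an: "(h \<circ> inv_into U \<phi>) analytic_on {\<phi> q}"
    using h unfolding holo_at_def by (elim bex_pair) auto
  note tf = trans_facts[OF atl UA VA qU qV]
  have cU: "complex_chart T (U, \<phi>)" using atl UA atlas_chart by blast
  have "((h \<circ> inv_into U \<phi>) \<circ> (\<phi> \<circ> inv_into V \<rho>)) analytic_on {\<rho> q}"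
  proof (rule analytic_on_compose)
    show "(\<phi> \<circ> inv_into V \<rho>) analytic_on {\<rho> q}"
    proof -
      have "(\<phi> \<circ> inv_into V \<rho>) analytic_on (\<rho> ` (V \<inter> U))"
        using tf(1,3) by (simp add: analytic_on_open)
      thus ?thesis by (rule analytic_on_subset) (use tf(2) in simp)
    qed
    have "(\<phi> \<circ> inv_into V \<rho>) ` {\<rho> q} = {\<phi> q}"
      using chart_inv(1)[OF atlas_chart[OF atl VA] qV] by simp
    thus "(h \<circ> inv_into U \<phi>) analytic_on (\<phi> \<circ> inv_into V \<rho>) ` {\<rho> q}" using an by simp
  qed
  moreover have ev: "eventually (\<lambda>z. ((h \<circ> inv_into U \<phi>) \<circ> (\<phi> \<circ> inv_into V \<rho>)) z = (h \<circ> inv_into V \<rho>) z) (nhds (\<rho> q))"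
  proof (rule eventually_nhds_in_open[OF tf(1,2), THEN eventually_mono])
    fix z assume "z \<in> \<rho> ` (V \<inter> U)"
    thus "((h \<circ> inv_into U \<phi>) \<circ> (\<phi> \<circ> inv_into V \<rho>)) z = (h \<circ> inv_into V \<rho>) z"
      using tf(4) chart_inv(1)[OF cU] by auto
  qed
  ultimately show ?thesis using analytic_at_cong[OF ev refl] by (simp add: o_def)
qed

lemma open_vimage': "open s \<Longrightarrow> continuous_on s f \<Longrightarrow> open B \<Longrightarrow> open (s \<inter> f -` B)"
  using continuous_on_open_vimage by (metis Int_commute)

lemma nu_picture:
  assumes atl: "holomorphic_atlas T A"
    and lc: "local_coordinate T A p W \<nu>"
    and ex: "\<forall>q\<in>W. exp (x q) = X q"
    and sq: "\<forall>q\<in>W. (\<nu> q)\<^sup>2 = x q - x p"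
  obtains r where "r > 0"
    "\<And>w. w \<in> ball 0 r \<Longrightarrow> inv_into W \<nu> w \<in> W \<and> \<nu> (inv_into W \<nu> w) = w"
    "\<And>h w. w \<in> ball 0 r - {0} \<Longrightarrow> (\<lambda>w. h (inv_into W \<nu> w)) field_differentiable (at w) \<Longrightarrow>
        Dop A X h (inv_into W \<nu> w) = deriv (\<lambda>w. h (inv_into W \<nu> w)) w / (2 * w)"
    "\<And>h. holo_at A h p \<Longrightarrow> (\<lambda>w. h (inv_into W \<nu> w)) analytic_on {0}"
    "\<And>h. (\<lambda>w. h (inv_into W \<nu> w)) analytic_on {0} \<Longrightarrow> holo_at A h p"
    "\<And>Ov. openin T Ov \<Longrightarrow> p \<in> Ov \<Longrightarrow> eventually (\<lambda>w. inv_into W \<nu> w \<in> Ov) (nhds 0)"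
    "\<And>e. e > 0 \<Longrightarrow> \<exists>W'. openin T W' \<and> p \<in> W' \<and> (\<forall>q\<in>W'. q \<in> W \<and> \<nu> q \<in> ball 0 e)"
    "\<nu> p = 0"
proof -
  have oW: "openin T W" and pW: "p \<in> W" and injW: "inj_on \<nu> W"
    and lcq: "\<forall>q\<in>W. \<exists>(U, \<phi>)\<in>A. q \<in> U \<and> (\<nu> \<circ> inv_into U \<phi>) analytic_on {\<phi> q} \<and>
        deriv (\<nu> \<circ> inv_into U \<phi>) (\<phi> q) \<noteq> 0"
    using lc unfolding local_coordinate_def by auto
  obtain U \<phi> where UA: "(U, \<phi>) \<in> A" and pU: "p \<in> U" and nan0: "(\<nu> \<circ> inv_into U \<phi>) analytic_on {\<phi> p}"
    using bspec[OF lcq pW] by (elim bex_pair) auto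
  have cU: "complex_chart T (U, \<phi>)" using atl UA atlas_chart by blast
  define \<psi> where "\<psi> = inv_into U \<phi>"
  define n where "n = (\<lambda>z. \<nu> (\<psi> z))"
  define Pn where "Pn = inv_into W \<nu>"
  have nan: "n analytic_on {\<phi> p}" using nan0 by (simp add: n_def \<psi>_def o_def)
  have \<psi>\<phi>: "\<And>q. q \<in> U \<Longrightarrow> \<psi> (\<phi> q) = q" using chart_inv(1)[OF cU] by (simp add: \<psi>_def)
  have Utop: "U \<subseteq> topspace T" using chart_props(4)[OF cU] .
  have S0o: "open (\<phi> ` (U \<inter> W))" using chart_open_image[OF cU oW] .
  obtain e0 where e0: "e0 > 0" "n holomorphic_on ball (\<phi> p) e0"
    using nan unfolding analytic_on_def by blast
  define S where "S = ball (\<phi> p) e0 \<inter> \<phi> ` (U \<inter> W)"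
  have oS: "open S" using S0o by (simp add: S_def open_Int)
  have pS: "\<phi> p \<in> S" using e0 pU pW by (simp add: S_def)
  have Sf: "\<psi> z \<in> U \<and> \<psi> z \<in> W \<and> \<phi> (\<psi> z) = z" if "z \<in> S" for z
  proof -
    from that obtain q where "q \<in> U" "q \<in> W" "z = \<phi> q" by (auto simp: S_def)
    thus ?thesis using \<psi>\<phi> by simp
  qed
  have p0: "\<nu> p = 0" using bspec[OF sq pW] by simp
  have np0: "n (\<phi> p) = 0" using \<psi>\<phi>[OF pU] p0 by (simp add: n_def)
  have injS: "inj_on n S"
  proof (rule inj_onI)
    fix z z' assume z: "z \<in> S" "z' \<in> S" and e: "n z = n z'"
    have "\<psi> z = \<psi> z'" using inj_onD[OF injW e[unfolded n_def]] Sf[OF z(1)] Sf[OF z(2)] by blast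
    hence "\<phi> (\<psi> z) = \<phi> (\<psi> z')" by simp
    thus "z = z'" using Sf[OF z(1)] Sf[OF z(2)] by simp
  qed
  have holS: "n holomorphic_on S" using e0(2) by (rule holomorphic_on_subset) (auto simp: S_def)
  obtain g where gh: "g holomorphic_on n ` S" and gd: "\<And>z. z \<in> S \<Longrightarrow> deriv n z * deriv g (n z) = 1"
    and gi: "\<And>z. z \<in> S \<Longrightarrow> g (n z) = z"
    using holomorphic_has_inverse[OF holS oS injS] by blast
  have onS: "open (n ` S)" using open_mapping_thm3[OF holS oS injS] .
  have zS: "0 \<in> n ` S" using pS np0 by (metis image_eqI)
  obtain r0 where r0: "r0 > 0" "ball 0 r0 \<subseteq> n ` S" using openE[OF onS zS] by metis
  have key: "g w \<in> S \<and> n (g w) = w \<and> Pn w = \<psi> (g w)" if "w \<in> n ` S" for w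
  proof -
    from that obtain z where z: "z \<in> S" "w = n z" by blast
    have "Pn w = \<psi> z" unfolding Pn_def
      by (rule inv_into_f_eq[OF injW]) (use Sf[OF z(1)] z in \<open>auto simp: n_def\<close>)
    thus ?thesis using z gi by simp
  qed
  have g0: "g 0 = \<phi> p" using gi[OF pS] np0 by simp
  have gcont: "continuous_on (n ` S) g" using holomorphic_on_imp_continuous_on[OF gh] .
  have A1: "Pn w \<in> W \<and> \<nu> (Pn w) = w" if "w \<in> ball 0 r0" for w
  proof -
    have w: "w \<in> n ` S" using that r0 by blast
    from key[OF w] Sf[of "g w"] show ?thesis by (simp add: n_def)
  qed
  have A5: "eventually (\<lambda>w. Pn w \<in> Ov) (nhds 0)" if "openin T Ov" "p \<in> Ov" for Ov
  proof -
    have oG: "open (\<phi> ` (U \<inter> Ov))" using chart_open_image[OF cU that(1)] .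
    have o2: "open (n ` S \<inter> g -` (\<phi> ` (U \<inter> Ov)))" using open_vimage'[OF onS gcont oG] .
    have "0 \<in> n ` S \<inter> g -` (\<phi> ` (U \<inter> Ov))" using zS g0 pU that(2) by auto
    hence "eventually (\<lambda>w. w \<in> n ` S \<inter> g -` (\<phi> ` (U \<inter> Ov))) (nhds 0)"
      by (rule eventually_nhds_in_open[OF o2])
    thus ?thesis
    proof (rule eventually_mono)
      fix w assume w: "w \<in> n ` S \<inter> g -` (\<phi> ` (U \<inter> Ov))"
      then obtain q where q: "q \<in> U" "q \<in> Ov" "g w = \<phi> q" by auto
      show "Pn w \<in> Ov" using key[of w] w q \<psi>\<phi> by auto
    qed
  qed
  have A6: "\<exists>W'. openin T W' \<and> p \<in> W' \<and> (\<forall>q\<in>W'. q \<in> W \<and> \<nu> q \<in> ball 0 e)" if "e > 0" for e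
  proof -
    have o3: "open (S \<inter> n -` ball 0 e)"
      using open_vimage'[OF oS holomorphic_on_imp_continuous_on[OF holS]] by simp
    define W' where "W' = {q\<in>U. \<phi> q \<in> S \<inter> n -` ball 0 e}"
    have "openin T W'" unfolding W'_def using chart_open_preimage[OF cU o3] .
    moreover have "p \<in> W'" using pU pS np0 that by (simp add: W'_def)
    moreover have "q \<in> W \<and> \<nu> q \<in> ball 0 e" if "q \<in> W'" for q
    proof -
      from that have q: "q \<in> U" "\<phi> q \<in> S" "n (\<phi> q) \<in> ball 0 e" by (auto simp: W'_def)
      thus ?thesis using Sf[OF q(2)] \<psi>\<phi>[OF q(1)] by (simp add: n_def)
    qed
    ultimately show ?thesis by blast
  qed
  have A4: "holo_at A h p" if "(\<lambda>w. h (Pn w)) analytic_on {0}" for h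
  proof -
    have an1: "((\<lambda>w. h (Pn w)) \<circ> n) analytic_on {\<phi> p}"
      by (rule analytic_on_compose[OF nan]) (use that np0 in simp)
    have ev1: "eventually (\<lambda>z. ((\<lambda>w. h (Pn w)) \<circ> n) z = (h \<circ> \<psi>) z) (nhds (\<phi> p))"
    proof (rule eventually_nhds_in_open[OF oS pS, THEN eventually_mono])
      fix z assume z: "z \<in> S"
      have "Pn (n z) = \<psi> z" unfolding Pn_def n_def using inv_into_f_f[OF injW] Sf[OF z] by blast
      thus "((\<lambda>w. h (Pn w)) \<circ> n) z = (h \<circ> \<psi>) z" by simp
    qed
    have "(h \<circ> \<psi>) analytic_on {\<phi> p}" using an1 analytic_at_cong[OF ev1 refl] by (simp add: o_def)
    thus ?thesis unfolding holo_at_def using UA pU \<psi>_def by (intro bexI[of _ "(U, \<phi>)"]) auto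
  qed
  have A3: "(\<lambda>w. h (Pn w)) analytic_on {0}" if "holo_at A h p" for h
  proof -
    have hc: "(h \<circ> \<psi>) analytic_on {\<phi> p}" using holo_at_chart[OF atl that UA pU] by (simp add: \<psi>_def)
    have gan: "g analytic_on {0}"
    proof -
      have "g analytic_on n ` S" using gh onS by (simp add: analytic_on_open)
      thus ?thesis by (rule analytic_on_subset) (use zS in simp)
    qed
    have an1: "((h \<circ> \<psi>) \<circ> g) analytic_on {0}"
      by (rule analytic_on_compose[OF gan]) (use hc g0 in simp)
    have ev1: "eventually (\<lambda>w. ((h \<circ> \<psi>) \<circ> g) w = h (Pn w)) (nhds 0)"
    proof (rule eventually_nhds_in_open[OF onS zS, THEN eventually_mono])
      fix w assume "w \<in> n ` S"
      thus "((h \<circ> \<psi>) \<circ> g) w = h (Pn w)" using key by simp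
    qed
    show ?thesis using an1 analytic_at_cong[OF ev1 refl] by (simp add: o_def)
  qed
  have A2: "Dop A X h (Pn w) = deriv (\<lambda>w. h (Pn w)) w / (2 * w)"
    if w: "w \<in> ball 0 r0 - {0}" and hd: "(\<lambda>w. h (Pn w)) field_differentiable (at w)" for h w
  proof -
    have wS: "w \<in> n ` S" using w r0 by blast
    define z1 where "z1 = g w"
    define q where "q = Pn w"
    have z1S: "z1 \<in> S" and nz1: "n z1 = w" and qz: "q = \<psi> z1" using key[OF wS] by (auto simp: z1_def q_def)
    have qU: "q \<in> U" and qW: "q \<in> W" and \<phi>q: "\<phi> q = z1" using Sf[OF z1S] qz by auto
    have \<nu>q: "\<nu> q = w" using nz1 qz by (simp add: n_def)
    have qT: "q \<in> topspace T" using qU Utop by blast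
    obtain V \<rho> where cq: "chart_at A q = (V, \<rho>)" by (cases "chart_at A q")
    have VA: "(V, \<rho>) \<in> A" and qV: "q \<in> V" using chart_at_props[OF atl qT] cq by auto
    have cV: "complex_chart T (V, \<rho>)" using atl VA atlas_chart by blast
    note tf = trans_facts[OF atl UA VA qU qV]
    define \<tau> where "\<tau> = \<phi> \<circ> inv_into V \<rho>"
    define \<psi>V where "\<psi>V = inv_into V \<rho>"
    define Oo where "Oo = \<rho> ` (V \<inter> U) \<inter> \<tau> -` S"
    have \<tau>hol: "\<tau> holomorphic_on \<rho> ` (V \<inter> U)" using tf(3) by (simp add: \<tau>_def)
    have oO: "open Oo" unfolding Oo_def
      by (rule open_vimage'[OF tf(1) holomorphic_on_imp_continuous_on[OF \<tau>hol] oS])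
    have \<psi>Vq: "\<psi>V (\<rho> q) = q" using chart_inv(1)[OF cV qV] by (simp add: \<psi>V_def)
    have \<tau>q: "\<tau> (\<rho> q) = z1" using \<psi>Vq \<phi>q by (simp add: \<tau>_def \<psi>V_def)
    have qO: "\<rho> q \<in> Oo" unfolding Oo_def using tf(2) \<tau>q z1S by simp
    have onO: "h (\<psi>V z) = h (Pn (n (\<tau> z))) \<and> X (\<psi>V z) = exp ((n (\<tau> z))\<^sup>2 + x p)" if z: "z \<in> Oo" for z
    proof -
      define y where "y = \<psi>V z"
      have y: "y \<in> V" "y \<in> U" using tf(4)[of z] z by (auto simp: Oo_def y_def \<psi>V_def)
      have \<tau>z: "\<tau> z = \<phi> y" by (simp add: \<tau>_def y_def \<psi>V_def)
      have "\<tau> z \<in> S" using z by (simp add: Oo_def)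
      hence yW: "y \<in> W" using Sf[of "\<tau> z"] \<tau>z \<psi>\<phi>[OF y(2)] by simp
      have ny: "n (\<tau> z) = \<nu> y" using \<tau>z \<psi>\<phi>[OF y(2)] by (simp add: n_def)
      have Pny: "Pn (\<nu> y) = y" unfolding Pn_def using inv_into_f_f[OF injW yW] .
      have xy: "x y = (\<nu> y)\<^sup>2 + x p" using bspec[OF sq yW] by simp
      show ?thesis using ny Pny xy bspec[OF ex yW] by (simp add: y_def)
    qed
    have d\<tau>: "(\<tau> has_field_derivative deriv \<tau> (\<rho> q)) (at (\<rho> q))"
      using holomorphic_derivI[OF \<tau>hol tf(1) tf(2)] .
    have dn: "(n has_field_derivative deriv n z1) (at (\<tau> (\<rho> q)))"
      using holomorphic_derivI[OF holS oS z1S] \<tau>q by simp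
    have dh: "((\<lambda>w. h (Pn w)) has_field_derivative deriv (\<lambda>w. h (Pn w)) w) (at (n (\<tau> (\<rho> q))))"
      using hd \<tau>q nz1 by (simp add: DERIV_deriv_iff_field_differentiable)
    have d1: "((\<lambda>z. n (\<tau> z)) has_field_derivative deriv n z1 * deriv \<tau> (\<rho> q)) (at (\<rho> q))"
      using DERIV_chain2[OF dn d\<tau>] .
    have d2: "((\<lambda>z. h (Pn (n (\<tau> z)))) has_field_derivative
        deriv (\<lambda>w. h (Pn w)) w * (deriv n z1 * deriv \<tau> (\<rho> q))) (at (\<rho> q))"
      using DERIV_chain2[OF dh d1] .
    have de: "((\<lambda>u. exp (u\<^sup>2 + x p)) has_field_derivative exp (w\<^sup>2 + x p) * (2 * w)) (at (n (\<tau> (\<rho> q))))"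
      using \<tau>q nz1 by (auto intro!: derivative_eq_intros)
    have d3: "((\<lambda>z. exp ((n (\<tau> z))\<^sup>2 + x p)) has_field_derivative
        exp (w\<^sup>2 + x p) * (2 * w) * (deriv n z1 * deriv \<tau> (\<rho> q))) (at (\<rho> q))"
      using DERIV_chain2[OF de d1] .
    have d2': "((h \<circ> \<psi>V) has_field_derivative
        deriv (\<lambda>w. h (Pn w)) w * (deriv n z1 * deriv \<tau> (\<rho> q))) (at (\<rho> q))"
      by (rule has_field_derivative_transform_within_open[OF d2 oO qO]) (use onO in simp)
    have d3': "((X \<circ> \<psi>V) has_field_derivative
        exp (w\<^sup>2 + x p) * (2 * w) * (deriv n z1 * deriv \<tau> (\<rho> q))) (at (\<rho> q))"
      by (rule has_field_derivative_transform_within_open[OF d3 oO qO]) (use onO in simp)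
    have dn0: "deriv n z1 \<noteq> 0" using gd[OF z1S] by auto
    have dt0: "deriv \<tau> (\<rho> q) \<noteq> 0" using tf(5) by (simp add: \<tau>_def)
    have Xq: "X q = exp (w\<^sup>2 + x p)" using bspec[OF ex qW] bspec[OF sq qW] \<nu>q by simp
    have w0: "w \<noteq> 0" using w by simp
    have "Dop A X h q = X q * deriv (h \<circ> \<psi>V) (\<rho> q) / deriv (X \<circ> \<psi>V) (\<rho> q)"
      by (simp add: Dop_def cq \<psi>V_def)
    also have "\<dots> = deriv (\<lambda>w. h (Pn w)) w / (2 * w)"
      using DERIV_imp_deriv[OF d2'] DERIV_imp_deriv[OF d3'] Xq dn0 dt0 w0 by (simp add: field_simps)
    finally show ?thesis by (simp add: q_def)
  qed
  show ?thesis
    by (rule that[of r0]) (use r0 A1 A2 A3 A4 A5 A6 p0 in \<open>auto simp: Pn_def\<close>)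
qed

lemma iter_step:
  fixes Pn :: "complex \<Rightarrow> 'a" and Dp :: "('a \<Rightarrow> complex) \<Rightarrow> ('a \<Rightarrow> complex)"
  assumes sr: "s \<le> r"
    and form: "\<And>h w. w \<in> ball 0 r - {0} \<Longrightarrow> (\<lambda>w. h (Pn w)) field_differentiable (at w) \<Longrightarrow>
        Dp h (Pn w) = deriv (\<lambda>w. h (Pn w)) w / (2 * w)"
    and H: "(\<lambda>w. (Dp ^^ k) h (Pn w)) holomorphic_on ball 0 s - {0}"
  shows "\<forall>w\<in>ball 0 s - {0}. (Dp ^^ Suc k) h (Pn w) = deriv (\<lambda>w. (Dp ^^ k) h (Pn w)) w / (2 * w)"
    "(\<lambda>w. (Dp ^^ Suc k) h (Pn w)) holomorphic_on ball 0 s - {0}"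
proof -
  have o: "open (ball (0::complex) s - {0})" by auto
  show F: "\<forall>w\<in>ball 0 s - {0}. (Dp ^^ Suc k) h (Pn w) = deriv (\<lambda>w. (Dp ^^ k) h (Pn w)) w / (2 * w)"
  proof
    fix w :: complex assume w: "w \<in> ball 0 s - {0}"
    have "(\<lambda>w. (Dp ^^ k) h (Pn w)) field_differentiable (at w)"
      using H o w holomorphic_on_imp_differentiable_at by blast
    moreover have "w \<in> ball 0 r - {0}" using w sr by auto
    ultimately show "(Dp ^^ Suc k) h (Pn w) = deriv (\<lambda>w. (Dp ^^ k) h (Pn w)) w / (2 * w)"
      using form[of w "(Dp ^^ k) h"] by simp
  qed
  have "(\<lambda>w. deriv (\<lambda>w. (Dp ^^ k) h (Pn w)) w / (2 * w)) holomorphic_on ball 0 s - {0}"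
    by (intro holomorphic_intros holomorphic_deriv[OF H o]) auto
  thus "(\<lambda>w. (Dp ^^ Suc k) h (Pn w)) holomorphic_on ball 0 s - {0}"
    by (rule holomorphic_transform) (use F in simp)
qed

lemma iter_holo:
  fixes Pn :: "complex \<Rightarrow> 'a" and Dp :: "('a \<Rightarrow> complex) \<Rightarrow> ('a \<Rightarrow> complex)"
  assumes sr: "s \<le> r"
    and form: "\<And>h w. w \<in> ball 0 r - {0} \<Longrightarrow> (\<lambda>w. h (Pn w)) field_differentiable (at w) \<Longrightarrow>
        Dp h (Pn w) = deriv (\<lambda>w. h (Pn w)) w / (2 * w)"
    and hol: "(\<lambda>w. h (Pn w)) holomorphic_on ball 0 s - {0}"
  shows "(\<lambda>w. (Dp ^^ j) h (Pn w)) holomorphic_on ball 0 s - {0} \<and>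
    (\<forall>w\<in>ball 0 s - {0}. (Dp ^^ Suc j) h (Pn w) = deriv (\<lambda>w. (Dp ^^ j) h (Pn w)) w / (2 * w))"
proof (induction j)
  case 0
  show ?case using iter_step[OF sr form, of 0 h] hol by simp
next
  case (Suc j)
  show ?case using iter_step[OF sr form, of "Suc j" h] iter_step[OF sr form, of j h] Suc.IH by blast
qed

lemma odd_pp_step:
  assumes "odd_principal_part F"
  shows "odd_principal_part (fls_const (1/2) * fls_shift 1 (fls_deriv F))"
  unfolding odd_principal_part_def
proof (intro allI impI)
  fix n :: int assume n: "n < 0 \<and> even n"
  show "fls_nth (fls_const (1/2) * fls_shift 1 (fls_deriv F)) n = 0"
  proof (cases "n = -2")
    case True thus ?thesis by simp
  next
    case False
    hence "n + 1 + 1 < 0 \<and> even (n + 1 + 1)" using n by auto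
    hence "fls_nth F (n + 1 + 1) = 0" using assms by (simp add: odd_principal_part_def)
    thus ?thesis by simp
  qed
qed

lemma iter_laurent:
  fixes Pn :: "complex \<Rightarrow> 'a" and Dp :: "('a \<Rightarrow> complex) \<Rightarrow> ('a \<Rightarrow> complex)"
  assumes sr: "s \<le> r" and s0: "s > 0"
    and form: "\<And>h w. w \<in> ball 0 r - {0} \<Longrightarrow> (\<lambda>w. h (Pn w)) field_differentiable (at w) \<Longrightarrow>
        Dp h (Pn w) = deriv (\<lambda>w. h (Pn w)) w / (2 * w)"
    and hol: "(\<lambda>w. h (Pn w)) holomorphic_on ball 0 s"
  shows "\<exists>F. (\<lambda>w. (Dp ^^ j) h (Pn w)) has_laurent_expansion F \<and> odd_principal_part F"
proof (induction j)
  case 0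
  have "(\<lambda>w. h (Pn w)) analytic_on {0}"
  proof -
    have "(\<lambda>w. h (Pn w)) analytic_on ball 0 s" using hol by (simp add: analytic_on_open)
    thus ?thesis by (rule analytic_on_subset) (use s0 in simp)
  qed
  hence "(\<lambda>w. h (Pn w)) has_laurent_expansion fps_to_fls (fps_expansion (\<lambda>w. h (Pn w)) 0)"
    by (intro has_laurent_expansion_fps analytic_at_imp_has_fps_expansion_0)
  moreover have "odd_principal_part (fps_to_fls (fps_expansion (\<lambda>w. h (Pn w)) 0))"
    by (simp add: odd_principal_part_def)
  ultimately show ?case by auto
next
  case (Suc j)
  then obtain F where F: "(\<lambda>w. (Dp ^^ j) h (Pn w)) has_laurent_expansion F" "odd_principal_part F" by blast
  have hol': "(\<lambda>w. h (Pn w)) holomorphic_on ball 0 s - {0}" using hol holomorphic_on_subset by blast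
  have eq: "\<forall>w\<in>ball 0 s - {0}. (Dp ^^ Suc j) h (Pn w) = deriv (\<lambda>w. (Dp ^^ j) h (Pn w)) w / (2 * w)"
    using iter_holo[OF sr form hol'] by blast
  have "(\<lambda>w. 1/2 * (deriv (\<lambda>w. (Dp ^^ j) h (Pn w)) w * w powi (-1))) has_laurent_expansion
        fls_const (1/2) * fls_shift 1 (fls_deriv F)"
    by (intro laurent_expansion_intros F(1))
  also have "?this \<longleftrightarrow> (\<lambda>w. (Dp ^^ Suc j) h (Pn w)) has_laurent_expansion fls_const (1/2) * fls_shift 1 (fls_deriv F)"
  proof (intro has_laurent_expansion_cong)
    have "eventually (\<lambda>w. w \<in> ball 0 s - {0}) (at (0::complex))"
      using s0 by (intro eventually_at_in_open) auto
    thus "eventually (\<lambda>w. 1/2 * (deriv (\<lambda>w. (Dp ^^ j) h (Pn w)) w * w powi (-1)) =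
        (Dp ^^ Suc j) h (Pn w)) (at 0)"
      by (rule eventually_mono) (use eq in \<open>auto simp: power_int_minus field_simps\<close>)
  qed simp
  finally show ?case using odd_pp_step[OF F(2)] by blast
qed

lemma odd_pp_sum:
  assumes "\<And>k. k \<in> I \<Longrightarrow> odd_principal_part (G k)"
  shows "odd_principal_part (\<Sum>k\<in>I. fls_const (c k) * G k)"
  using assms by (simp add: odd_principal_part_def fls_nth_sum)

lemma forward_point:
  assumes atl: "holomorphic_atlas T A"
    and lc: "local_coordinate T A p W \<nu>" and sl: "sqrt_log_coordinate A X p W \<nu>"
    and hf: "\<forall>k<m. holo_at A (f k) p"
    and Wg: "openin T Wg" "p \<in> Wg"
    and geq: "\<forall>q\<in>Wg - {p}. g q = (\<Sum>k<m. c k * (Dop A X ^^ j k) (f k) q)"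
  shows "\<exists>F. (\<lambda>w. g (inv_into W \<nu> w)) has_laurent_expansion F \<and> odd_principal_part F"
proof -
  obtain x where ex: "\<forall>q\<in>W. exp (x q) = X q" and sq: "\<forall>q\<in>W. (\<nu> q)\<^sup>2 = x q - x p"
    using sl unfolding sqrt_log_coordinate_def by blast
  obtain r where r0: "r > 0"
    and A1: "\<And>w. w \<in> ball 0 r \<Longrightarrow> inv_into W \<nu> w \<in> W \<and> \<nu> (inv_into W \<nu> w) = w"
    and A2: "\<And>h w. w \<in> ball 0 r - {0} \<Longrightarrow> (\<lambda>w. h (inv_into W \<nu> w)) field_differentiable (at w) \<Longrightarrow>
        Dop A X h (inv_into W \<nu> w) = deriv (\<lambda>w. h (inv_into W \<nu> w)) w / (2 * w)"
    and A3: "\<And>h. holo_at A h p \<Longrightarrow> (\<lambda>w. h (inv_into W \<nu> w)) analytic_on {0}"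
    and A4: "\<And>h. (\<lambda>w. h (inv_into W \<nu> w)) analytic_on {0} \<Longrightarrow> holo_at A h p"
    and A5: "\<And>Ov. openin T Ov \<Longrightarrow> p \<in> Ov \<Longrightarrow> eventually (\<lambda>w. inv_into W \<nu> w \<in> Ov) (nhds 0)"
    and A6: "\<And>e. e > 0 \<Longrightarrow> \<exists>W'. openin T W' \<and> p \<in> W' \<and> (\<forall>q\<in>W'. q \<in> W \<and> \<nu> q \<in> ball 0 e)"
    and p0: "\<nu> p = 0"
    apply (rule nu_picture[OF atl lc ex sq])
    subgoal premises P for r by (rule P(1)[OF P(2-9)])
    done
  have "\<forall>k\<in>{..<m}. \<exists>F. (\<lambda>w. (Dop A X ^^ j k) (f k) (inv_into W \<nu> w)) has_laurent_expansion F \<and> odd_principal_part F"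
  proof
    fix k assume "k \<in> {..<m}"
    hence "(\<lambda>w. f k (inv_into W \<nu> w)) analytic_on {0}" using hf A3 by auto
    then obtain s where s: "s > 0" "(\<lambda>w. f k (inv_into W \<nu> w)) holomorphic_on ball 0 s"
      unfolding analytic_on_def by blast
    have hs: "(\<lambda>w. f k (inv_into W \<nu> w)) holomorphic_on ball 0 (min s r)"
      using s(2) by (rule holomorphic_on_subset) auto
    show "\<exists>F. (\<lambda>w. (Dop A X ^^ j k) (f k) (inv_into W \<nu> w)) has_laurent_expansion F \<and> odd_principal_part F"
      by (rule iter_laurent[of "min s r" r, OF _ _ A2 hs]) (use s r0 in auto)
  qed
  from bchoice[OF this] obtain FF where FF: "\<forall>k\<in>{..<m}. (\<lambda>w. (Dop A X ^^ j k) (f k) (inv_into W \<nu> w)) has_laurent_expansion FF k \<and> odd_principal_part (FF k)"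
    by blast
  have "(\<lambda>w. \<Sum>k<m. c k * (Dop A X ^^ j k) (f k) (inv_into W \<nu> w)) has_laurent_expansion (\<Sum>k<m. fls_const (c k) * FF k)"
    by (intro has_laurent_expansion_sum has_laurent_expansion_cmult_left) (use FF in auto)
  also have "?this \<longleftrightarrow> (\<lambda>w. g (inv_into W \<nu> w)) has_laurent_expansion (\<Sum>k<m. fls_const (c k) * FF k)"
  proof (intro has_laurent_expansion_cong refl)
    have e1: "eventually (\<lambda>w. inv_into W \<nu> w \<in> Wg) (at (0::complex))"
      using A5[OF Wg] unfolding eventually_at_filter by (rule eventually_mono) auto
    have e2: "eventually (\<lambda>w. w \<in> ball 0 r - {0}) (at (0::complex))"
      using r0 by (intro eventually_at_in_open) auto
    show "eventually (\<lambda>w. (\<Sum>k<m. c k * (Dop A X ^^ j k) (f k) (inv_into W \<nu> w)) = g (inv_into W \<nu> w)) (at 0)"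
      using e1 e2
    proof eventually_elim
      case (elim w)
      have "inv_into W \<nu> w \<noteq> p" using A1[of w] elim p0 by auto
      thus ?case using geq elim by auto
    qed
  qed
  finally show ?thesis using odd_pp_sum[of "{..<m}" FF c] FF by blast
qed

lemma double_zero:
  fixes f :: "complex \<Rightarrow> complex"
  assumes hol: "f holomorphic_on ball z0 e" and e: "e > 0" and d1: "deriv f z0 = 0"
  obtains u where "u holomorphic_on ball z0 e" "\<And>z. z \<in> ball z0 e \<Longrightarrow> f z = f z0 + (z - z0)\<^sup>2 * u z"
    "deriv (deriv f) z0 = 2 * u z0"
proof -
  define S where "S = ball z0 e"
  have oS: "open S" and zS: "z0 \<in> S" and izS: "z0 \<in> interior S" using e by (auto simp: S_def)
  define h1 where "h1 = (\<lambda>z. if z = z0 then deriv f z0 else (f z - f z0) / (z - z0))"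
  have h1h: "h1 holomorphic_on S" unfolding h1_def using pole_lemma[OF hol[folded S_def] izS] .
  have h10: "h1 z0 = 0" using d1 by (simp add: h1_def)
  have fh1: "f z = f z0 + (z - z0) * h1 z" for z by (cases "z = z0") (auto simp: h1_def)
  define u where "u = (\<lambda>z. if z = z0 then deriv h1 z0 else (h1 z - h1 z0) / (z - z0))"
  have uh: "u holomorphic_on S" unfolding u_def using pole_lemma[OF h1h izS] .
  have h1u: "h1 z = (z - z0) * u z" for z using h10 by (cases "z = z0") (auto simp: u_def)
  have fu: "f z = f z0 + (z - z0)\<^sup>2 * u z" for z using fh1[of z] h1u[of z] by (simp add: power2_eq_square)
  have du: "(u has_field_derivative deriv u z) (at z)" if "z \<in> S" for z
    using holomorphic_derivI[OF uh oS that] .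
  have duh: "deriv u holomorphic_on S" using holomorphic_deriv[OF uh oS] .
  have ddu: "(deriv u has_field_derivative deriv (deriv u) z) (at z)" if "z \<in> S" for z
    using holomorphic_derivI[OF duh oS that] .
  define G where "G = (\<lambda>z. 2 * (z - z0) * u z + (z - z0)\<^sup>2 * deriv u z)"
  have dfG: "deriv f z = G z" if "z \<in> S" for z
  proof -
    have "((\<lambda>z. f z0 + (z - z0)\<^sup>2 * u z) has_field_derivative G z) (at z)"
      unfolding G_def using du[OF that]
      by (auto intro!: derivative_eq_intros simp: power2_eq_square algebra_simps)
    moreover have feq: "(\<lambda>z. f z0 + (z - z0)\<^sup>2 * u z) = f" by (rule ext, rule fu[symmetric])
    ultimately have "(f has_field_derivative G z) (at z)" by simp
    thus ?thesis by (rule DERIV_imp_deriv)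
  qed
  have "(G has_field_derivative 2 * u z0) (at z0)"
    unfolding G_def using du[OF zS] ddu[OF zS]
    by (auto intro!: derivative_eq_intros simp: power2_eq_square algebra_simps)
  hence "(deriv f has_field_derivative 2 * u z0) (at z0)"
    by (rule has_field_derivative_transform_within_open[OF _ oS zS]) (use dfG in simp)
  hence "deriv (deriv f) z0 = 2 * u z0" by (rule DERIV_imp_deriv)
  thus ?thesis using that[of u] uh fu unfolding S_def by blast
qed

lemma ball1_nonpos: "w \<in> ball (1::complex) 1 \<Longrightarrow> w \<notin> \<real>\<^sub>\<le>\<^sub>0 \<and> w \<noteq> 0"
proof -
  assume w: "w \<in> ball (1::complex) 1"
  have "\<bar>Re (1 - w)\<bar> \<le> cmod (1 - w)" by (rule abs_Re_le_cmod)
  also have "\<dots> < 1" using w by (simp add: dist_norm)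
  finally have "Re w > 0" by simp
  thus ?thesis by (auto simp: complex_nonpos_Reals_iff)
qed

lemma open_vimage2: "open s \<Longrightarrow> continuous_on s f \<Longrightarrow> open B \<Longrightarrow> open (s \<inter> f -` B)"
  using continuous_on_open_vimage by (metis Int_commute)

lemma construct_nu:
  assumes atl: "holomorphic_atlas T A"
    and hX: "holo_at A X p" and Xp: "X p \<noteq> 0" and dz: "dX_simple_zero A X p"
  shows "\<exists>W \<nu>. local_coordinate T A p W \<nu> \<and> sqrt_log_coordinate A X p W \<nu>"
proof -
  obtain U \<phi> where UA: "(U, \<phi>) \<in> A" and pU: "p \<in> U"
    and d1: "deriv (X \<circ> inv_into U \<phi>) (\<phi> p) = 0" and d2: "deriv (deriv (X \<circ> inv_into U \<phi>)) (\<phi> p) \<noteq> 0"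
    using dz unfolding dX_simple_zero_def by (elim bex_pair) auto
  have cU: "complex_chart T (U, \<phi>)" using atl UA atlas_chart by blast
  define \<psi> where "\<psi> = inv_into U \<phi>"
  define Xc where "Xc = X \<circ> \<psi>"
  define z0 where "z0 = \<phi> p"
  define c0 where "c0 = X p"
  have \<psi>\<phi>: "\<And>q. q \<in> U \<Longrightarrow> \<psi> (\<phi> q) = q" using chart_inv(1)[OF cU] by (simp add: \<psi>_def)
  have \<phi>\<psi>: "\<And>z. z \<in> \<phi> ` U \<Longrightarrow> \<psi> z \<in> U \<and> \<phi> (\<psi> z) = z" using chart_inv(2)[OF cU] by (simp add: \<psi>_def)
  have oU: "open (\<phi> ` U)" using chart_props(2)[OF cU] .
  have z0U: "z0 \<in> \<phi> ` U" using pU by (simp add: z0_def)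
  have Xcz0: "Xc z0 = c0" using \<psi>\<phi>[OF pU] by (simp add: Xc_def z0_def c0_def)
  have c00: "c0 \<noteq> 0" using Xp by (simp add: c0_def)
  have Xcan: "Xc analytic_on {z0}" using holo_at_chart[OF atl hX UA pU] by (simp add: Xc_def \<psi>_def z0_def)
  obtain e1 where e1: "e1 > 0" "Xc holomorphic_on ball z0 e1" using Xcan unfolding analytic_on_def by blast
  define V1 where "V1 = (ball z0 e1 \<inter> \<phi> ` U) \<inter> (\<lambda>z. Xc z / c0) -` ball 1 1"
  have oV1: "open V1" unfolding V1_def
    by (rule open_vimage2) (auto intro!: holomorphic_on_imp_continuous_on holomorphic_intros
          holomorphic_on_subset[OF e1(2)] oU)
  have z0V1: "z0 \<in> V1" using e1 z0U Xcz0 c00 by (simp add: V1_def)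
  obtain e where e: "e > 0" "ball z0 e \<subseteq> V1" using openE[OF oV1 z0V1] by metis
  define B1 where "B1 = ball z0 e"
  have B1: "\<And>z. z \<in> B1 \<Longrightarrow> z \<in> ball z0 e1 \<and> z \<in> \<phi> ` U \<and> Xc z / c0 \<in> ball 1 1"
    using e(2) by (auto simp: B1_def V1_def)
  have oB1: "open B1" and z0B1: "z0 \<in> B1" using e by (auto simp: B1_def)
  have XcB1: "Xc holomorphic_on B1" using e1(2) by (rule holomorphic_on_subset) (use B1 in auto)
  define L where "L = (\<lambda>z. Ln (Xc z / c0))"
  have LB1: "L holomorphic_on B1" unfolding L_def
    by (intro holomorphic_intros XcB1) (use B1 ball1_nonpos in auto)
  have Lz0: "L z0 = 0" using Xcz0 c00 by (simp add: L_def)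
  have expL: "exp (L z) = Xc z / c0" if "z \<in> B1" for z
  proof -
    have "Xc z / c0 \<noteq> 0" using B1[OF that] ball1_nonpos by blast
    thus ?thesis by (simp add: L_def)
  qed
  have dXc: "(Xc has_field_derivative deriv Xc z) (at z)" if "z \<in> B1" for z
    using holomorphic_derivI[OF XcB1 oB1 that] .
  have dL: "deriv L z = deriv Xc z / Xc z" if "z \<in> B1" for z
  proof -
    have nz: "Xc z / c0 \<notin> \<real>\<^sub>\<le>\<^sub>0" "Xc z / c0 \<noteq> 0" using B1[OF that] ball1_nonpos by auto
    have "(L has_field_derivative inverse (Xc z / c0) * (deriv Xc z / c0)) (at z)"
      unfolding L_def
      by (rule DERIV_chain2[where f=Ln and g="\<lambda>z. Xc z / c0", OF has_field_derivative_Ln[OF nz(1)]])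
         (auto intro!: derivative_eq_intros dXc[OF that] simp: c00)
    hence "deriv L z = inverse (Xc z / c0) * (deriv Xc z / c0)" by (rule DERIV_imp_deriv)
    thus ?thesis using nz c00 by (simp add: field_simps)
  qed
  have d1': "deriv Xc z0 = 0" using d1 by (simp add: Xc_def \<psi>_def z0_def)
  have d2': "deriv (deriv Xc) z0 \<noteq> 0" using d2 by (simp add: Xc_def \<psi>_def z0_def)
  have dL0: "deriv L z0 = 0" using dL[OF z0B1] d1' by simp
  have dXch: "deriv Xc holomorphic_on B1" using holomorphic_deriv[OF XcB1 oB1] .
  have "((\<lambda>z. deriv Xc z / Xc z) has_field_derivative
      (deriv (deriv Xc) z0 * Xc z0 - deriv Xc z0 * deriv Xc z0) / (Xc z0 * Xc z0)) (at z0)"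
    by (rule DERIV_divide[OF holomorphic_derivI[OF dXch oB1 z0B1] dXc[OF z0B1]]) (use Xcz0 c00 in simp)
  moreover have "(deriv (deriv Xc) z0 * Xc z0 - deriv Xc z0 * deriv Xc z0) / (Xc z0 * Xc z0) = deriv (deriv Xc) z0 / c0"
    using d1' Xcz0 c00 by simp
  ultimately have "((\<lambda>z. deriv Xc z / Xc z) has_field_derivative deriv (deriv Xc) z0 / c0) (at z0)" by simp
  hence "(deriv L has_field_derivative deriv (deriv Xc) z0 / c0) (at z0)"
    by (rule has_field_derivative_transform_within_open[OF _ oB1 z0B1]) (use dL in simp)
  hence ddL: "deriv (deriv L) z0 \<noteq> 0" using DERIV_imp_deriv d2' c00 by force
  have LB: "L holomorphic_on ball z0 e" using LB1 by (simp add: B1_def)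
  obtain u where uh: "u holomorphic_on ball z0 e" and Lu: "\<And>z. z \<in> ball z0 e \<Longrightarrow> L z = L z0 + (z - z0)\<^sup>2 * u z"
    and du: "deriv (deriv L) z0 = 2 * u z0"
    using double_zero[OF LB e(1) dL0] by blast
  have u0: "u z0 \<noteq> 0" using ddL du by simp
  define V2 where "V2 = ball z0 e \<inter> (\<lambda>z. u z / u z0) -` ball 1 1"
  have oV2: "open V2" unfolding V2_def
    by (rule open_vimage2) (auto intro!: holomorphic_on_imp_continuous_on holomorphic_intros uh)
  have z0V2: "z0 \<in> V2" using e u0 by (simp add: V2_def)
  obtain e' where e': "e' > 0" "ball z0 e' \<subseteq> V2" using openE[OF oV2 z0V2] by metis
  define s where "s = (\<lambda>z. csqrt (u z / u z0) * csqrt (u z0))"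
  define n where "n = (\<lambda>z. (z - z0) * s z)"
  have V2p: "\<And>z. z \<in> ball z0 e' \<Longrightarrow> z \<in> ball z0 e \<and> u z / u z0 \<in> ball 1 1"
    using e'(2) by (auto simp: V2_def)
  have uh': "u holomorphic_on ball z0 e'" using uh by (rule holomorphic_on_subset) (use V2p in auto)
  have sh: "s holomorphic_on ball z0 e'" unfolding s_def
    by (intro holomorphic_intros uh') (use V2p ball1_nonpos in auto)
  have nh: "n holomorphic_on ball z0 e'" unfolding n_def by (intro holomorphic_intros sh)
  have n2: "(n z)\<^sup>2 = L z" if "z \<in> ball z0 e'" for z
  proof -
    have "(s z)\<^sup>2 = u z" using u0 by (simp add: s_def power_mult_distrib)
    thus ?thesis using Lu[of z] V2p[OF that] Lz0 by (simp add: n_def power_mult_distrib)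
  qed
  have z0e': "z0 \<in> ball z0 e'" using e' by simp
  have "(n has_field_derivative s z0) (at z0)"
    unfolding n_def using holomorphic_derivI[OF sh _ z0e']
    by (auto intro!: derivative_eq_intros)
  hence dn0: "deriv n z0 \<noteq> 0" using u0 by (auto simp: DERIV_imp_deriv s_def)
  obtain r1 where r1: "r1 > 0" "ball z0 r1 \<subseteq> ball z0 e'" "inj_on n (ball z0 r1)"
    using has_complex_derivative_locally_injective[OF nh z0e' _ dn0] by auto
  define B where "B = ball z0 r1"
  have oB: "open B" and z0B: "z0 \<in> B" using r1 by (auto simp: B_def)
  have Bsub: "\<And>z. z \<in> B \<Longrightarrow> z \<in> ball z0 e' \<and> z \<in> B1 \<and> z \<in> \<phi> ` U"
    using r1(2) V2p B1 by (auto simp: B_def B1_def)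
  have nB: "n holomorphic_on B" using nh by (rule holomorphic_on_subset) (use Bsub in auto)
  have injB: "inj_on n B" using r1(3) by (simp add: B_def)
  have dnB: "deriv n z \<noteq> 0" if "z \<in> B" for z
    using holomorphic_injective_imp_regular[OF nB oB injB that] .
  define W where "W = {q \<in> U. \<phi> q \<in> B}"
  define \<nu> where "\<nu> = (\<lambda>q. n (\<phi> q))"
  define x where "x = (\<lambda>q. L (\<phi> q) + Ln c0)"
  have oW: "openin T W" unfolding W_def using chart_open_preimage[OF cU oB] .
  have pW: "p \<in> W" using pU z0B by (simp add: W_def z0_def)
  have injW: "inj_on \<nu> W"
  proof (rule inj_onI)
    fix q q' assume q: "q \<in> W" "q' \<in> W" and e: "\<nu> q = \<nu> q'"
    have "\<phi> q = \<phi> q'" using inj_onD[OF injB e[unfolded \<nu>_def]] q by (auto simp: W_def)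
    thus "q = q'" using \<psi>\<phi> q by (metis (no_types, lifting) W_def mem_Collect_eq)
  qed
  have evB: "eventually (\<lambda>z. z \<in> B) (nhds (\<phi> q))" if "q \<in> W" for q
    using that oB by (intro eventually_nhds_in_open) (auto simp: W_def)
  have \<nu>\<psi>: "(\<nu> \<circ> \<psi>) z = n z" if "z \<in> B" for z using \<phi>\<psi> Bsub[OF that] by (simp add: \<nu>_def)
  have x\<psi>: "(x \<circ> \<psi>) z = L z + Ln c0" if "z \<in> B" for z using \<phi>\<psi> Bsub[OF that] by (simp add: x_def)
  have lc: "local_coordinate T A p W \<nu>"
    unfolding local_coordinate_def
  proof (intro conjI oW pW injW ballI)
    fix q assume q: "q \<in> W"
    have "n analytic_on B" using nB oB by (simp add: analytic_on_open)
    hence "n analytic_on {\<phi> q}" by (rule analytic_on_subset) (use q in \<open>auto simp: W_def\<close>)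
    moreover have ev: "eventually (\<lambda>z. n z = (\<nu> \<circ> \<psi>) z) (nhds (\<phi> q))"
      using evB[OF q] by (rule eventually_mono) (use \<nu>\<psi> in simp)
    ultimately have an: "(\<nu> \<circ> \<psi>) analytic_on {\<phi> q}" using analytic_at_cong[OF ev refl] by (simp add: o_def)
    have "deriv (\<nu> \<circ> \<psi>) (\<phi> q) = deriv n (\<phi> q)"
      using ev by (intro deriv_cong_ev) (auto simp: eq_commute)
    hence "deriv (\<nu> \<circ> \<psi>) (\<phi> q) \<noteq> 0" using dnB q by (simp add: W_def)
    thus "\<exists>(U', \<phi>')\<in>A. q \<in> U' \<and> (\<nu> \<circ> inv_into U' \<phi>') analytic_on {\<phi>' q} \<and> deriv (\<nu> \<circ> inv_into U' \<phi>') (\<phi>' q) \<noteq> 0"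
      using UA q an by (intro bexI[of _ "(U, \<phi>)"]) (auto simp: \<psi>_def W_def)
  qed
  have sl: "sqrt_log_coordinate A X p W \<nu>"
    unfolding sqrt_log_coordinate_def
  proof (intro exI[of _ x] conjI ballI)
    fix q assume q: "q \<in> W"
    have qU: "q \<in> U" and qB: "\<phi> q \<in> B" using q by (auto simp: W_def)
    have "L analytic_on B1" using LB1 oB1 by (simp add: analytic_on_open)
    hence "L analytic_on {\<phi> q}" by (rule analytic_on_subset) (use Bsub[OF qB] in auto)
    hence "(\<lambda>z. L z + Ln c0) analytic_on {\<phi> q}" by (intro analytic_intros)
    moreover have ev: "eventually (\<lambda>z. L z + Ln c0 = (x \<circ> \<psi>) z) (nhds (\<phi> q))"
      using evB[OF q] by (rule eventually_mono) (use x\<psi> in simp)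
    ultimately have "(x \<circ> \<psi>) analytic_on {\<phi> q}" using analytic_at_cong[OF ev refl] by (simp add: o_def)
    thus "holo_at A x q" unfolding holo_at_def using UA qU by (intro bexI[of _ "(U, \<phi>)"]) (auto simp: \<psi>_def)
    have "exp (x q) = exp (L (\<phi> q)) * c0" using c00 by (simp add: x_def exp_add)
    also have "\<dots> = Xc (\<phi> q)" using expL[of "\<phi> q"] Bsub[OF qB] c00 by simp
    also have "\<dots> = X q" using \<psi>\<phi>[OF qU] by (simp add: Xc_def)
    finally show "exp (x q) = X q" .
    have "x p = Ln c0" using Lz0 by (simp add: x_def z0_def)
    thus "(\<nu> q)\<^sup>2 = x q - x p" using n2[of "\<phi> q"] Bsub[OF qB] by (simp add: \<nu>_def x_def)
  qed
  show ?thesis using lc sl by blast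
qed

definition alph :: "nat \<Rightarrow> complex" where
  "alph j = (\<Prod>i<j. (1 - 2 * of_nat i) / 2)"

lemma alph_Suc: "alph (Suc j) = alph j * ((1 - 2 * of_nat j) / 2)"
  by (simp add: alph_def)

lemma alph_nz: "alph j \<noteq> 0"
proof -
  have "(1 - 2 * of_nat i :: complex) \<noteq> 0" for i :: nat
  proof
    assume "(1 - 2 * of_nat i :: complex) = 0"
    hence "(of_nat (2 * i) :: complex) = of_nat 1" by simp
    hence "2 * i = 1" using of_nat_eq_iff by blast
    thus False by presburger
  qed
  thus ?thesis by (simp add: alph_def)
qed

lemma iter_monomial:
  fixes Pn :: "complex \<Rightarrow> 'a" and Dp :: "('a \<Rightarrow> complex) \<Rightarrow> ('a \<Rightarrow> complex)" and \<nu> :: "'a \<Rightarrow> complex"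
  assumes form: "\<And>h w. w \<in> ball 0 r - {0} \<Longrightarrow> (\<lambda>w. h (Pn w)) field_differentiable (at w) \<Longrightarrow>
        Dp h (Pn w) = deriv (\<lambda>w. h (Pn w)) w / (2 * w)"
    and A1: "\<And>w. w \<in> ball 0 r \<Longrightarrow> \<nu> (Pn w) = w"
  shows "\<forall>w\<in>ball 0 r - {0}. (Dp ^^ j) (\<lambda>q. b * \<nu> q) (Pn w) = b * alph j * w powi (1 - 2 * int j)"
proof -
  have o: "open (ball (0::complex) r - {0})" by auto
  have hol0: "(\<lambda>w. b * \<nu> (Pn w)) holomorphic_on ball 0 r - {0}"
  proof (rule holomorphic_transform[of "\<lambda>w. b * w"])
    show "(\<lambda>w. b * w) holomorphic_on ball 0 r - {0}" by (intro holomorphic_intros)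
  qed (use A1 in auto)
  note IH = iter_holo[OF order.refl form hol0]
  show ?thesis
  proof (induction j)
    case 0
    show ?case using A1 by (auto simp: alph_def)
  next
    case (Suc j)
    show ?case
    proof
      fix w :: complex assume w: "w \<in> ball 0 r - {0}"
      define c where "c = b * alph j"
      define m where "m = 1 - 2 * int j"
      have ev: "eventually (\<lambda>v. (Dp ^^ j) (\<lambda>q. b * \<nu> q) (Pn v) = c * v powi m) (nhds w)"
        using eventually_nhds_in_open[OF o w] by (rule eventually_mono) (use Suc.IH in \<open>auto simp: c_def m_def\<close>)
      have "((\<lambda>v. c * v powi m) has_field_derivative c * (of_int m * w powi (m - 1) * 1)) (at w)"
        using w by (auto intro!: derivative_eq_intros)
      hence "deriv (\<lambda>v. c * v powi m) w = c * (of_int m * w powi (m - 1))" by (simp add: DERIV_imp_deriv)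
      moreover have "deriv (\<lambda>v. (Dp ^^ j) (\<lambda>q. b * \<nu> q) (Pn v)) w = deriv (\<lambda>v. c * v powi m) w"
        by (rule deriv_cong_ev[OF ev refl])
      ultimately have d: "deriv (\<lambda>v. (Dp ^^ j) (\<lambda>q. b * \<nu> q) (Pn v)) w = c * (of_int m * w powi (m - 1))"
        by simp
      have w0: "w \<noteq> 0" using w by simp
      have "(Dp ^^ Suc j) (\<lambda>q. b * \<nu> q) (Pn w) = c * (of_int m * w powi (m - 1)) / (2 * w)"
        using IH w d by auto
      also have "\<dots> = b * alph (Suc j) * w powi (1 - 2 * int (Suc j))"
      proof -
        have e1: "w powi (m - 1) = w powi m / w" using w0 by (simp add: power_int_diff)
        have "w powi (1 - 2 * int (Suc j)) = w powi (m - 2)" by (simp add: m_def)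
        also have "\<dots> = w powi m / w powi 2" by (intro power_int_diff) (use w0 in auto)
        also have "w powi 2 = w * w" by (simp add: power2_eq_square)
        finally have e2: "w powi (1 - 2 * int (Suc j)) = w powi m / (w * w)" .
        have e3: "(of_int m :: complex) = 1 - 2 * of_nat j" by (simp add: m_def)
        show ?thesis unfolding e1 e2 e3 using w0 by (simp add: alph_Suc c_def field_simps)
      qed
      finally show "(Dp ^^ Suc j) (\<lambda>q. b * \<nu> q) (Pn w) = b * alph (Suc j) * w powi (1 - 2 * int (Suc j))" .
    qed
  qed
qed

lemma regpart_sub:
  fixes F :: "complex fls"
  assumes odd: "odd_principal_part F"
  shows "\<forall>n<0. fls_nth (F - (\<Sum>k<nat (- fls_subdegree F). fls_const (fls_nth F (1 - 2 * int (Suc k))) *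
      fls_X_intpow (1 - 2 * int (Suc k)))) n = 0"
proof (intro allI impI)
  fix n :: int assume n: "n < 0"
  define M where "M = nat (- fls_subdegree F)"
  have trm: "fls_nth (fls_const (fls_nth F (1 - 2 * int (Suc k))) * fls_X_intpow (1 - 2 * int (Suc k))) n =
      (if k = nat ((- 1 - n) div 2) \<and> odd n then fls_nth F n else 0)" for k
  proof -
    have "n = 1 - 2 * int (Suc k) \<longleftrightarrow> (k = nat ((- 1 - n) div 2) \<and> odd n)"
    proof
      assume h: "n = 1 - 2 * int (Suc k)"
      hence "- 1 - n = 2 * int k" by simp
      hence "(- 1 - n) div 2 = int k" by simp
      moreover have "odd n" using h by presburger
      ultimately show "k = nat ((- 1 - n) div 2) \<and> odd n" by simp
    next
      assume h: "k = nat ((- 1 - n) div 2) \<and> odd n"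
      have "(- 1 - n) div 2 \<ge> 0" using n by simp
      hence "int k = (- 1 - n) div 2" using h by simp
      moreover have "2 * ((- 1 - n) div 2) = - 1 - n" using h by presburger
      ultimately show "n = 1 - 2 * int (Suc k)" by simp
    qed
    thus ?thesis by auto
  qed
  have sumeq: "fls_nth (\<Sum>k<M. fls_const (fls_nth F (1 - 2 * int (Suc k))) * fls_X_intpow (1 - 2 * int (Suc k))) n =
      (if nat ((- 1 - n) div 2) < M \<and> odd n then fls_nth F n else 0)"
  proof -
    have "fls_nth (\<Sum>k<M. fls_const (fls_nth F (1 - 2 * int (Suc k))) * fls_X_intpow (1 - 2 * int (Suc k))) n =
        (\<Sum>k<M. fls_nth (fls_const (fls_nth F (1 - 2 * int (Suc k))) * fls_X_intpow (1 - 2 * int (Suc k))) n)"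
      by (rule fls_nth_sum)
    also have "\<dots> = (\<Sum>k<M. if k = nat ((- 1 - n) div 2) \<and> odd n then fls_nth F n else 0)"
      by (rule sum.cong[OF refl], rule trm)
    also have "\<dots> = (if nat ((- 1 - n) div 2) < M \<and> odd n then fls_nth F n else 0)"
      by (cases "odd n") (simp_all add: sum.delta)
    finally show ?thesis .
  qed
  show "fls_nth (F - (\<Sum>k<nat (- fls_subdegree F). fls_const (fls_nth F (1 - 2 * int (Suc k))) *
      fls_X_intpow (1 - 2 * int (Suc k)))) n = 0"
  proof (cases "odd n")
    case False
    hence "fls_nth F n = 0" using odd n by (simp add: odd_principal_part_def)
    thus ?thesis using sumeq False by (simp add: M_def)
  next
    case True
    show ?thesis
    proof (cases "nat ((- 1 - n) div 2) < M")
      case True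
      thus ?thesis using sumeq \<open>odd n\<close> by (simp add: M_def)
    next
      case False
      define t where "t = (- 1 - n) div 2"
      have t0: "t \<ge> 0" using n by (simp add: t_def)
      have t2: "2 * t = - 1 - n" using True by (simp add: t_def)
      have "- fls_subdegree F \<le> t"
      proof (rule ccontr)
        assume "\<not> - fls_subdegree F \<le> t"
        hence "nat t < nat (- fls_subdegree F)" using t0 by simp
        thus False using False by (simp add: M_def t_def)
      qed
      hence "n < fls_subdegree F" using t0 t2 by linarith
      thus ?thesis using sumeq by (simp add: M_def)
    qed
  qed
qed

lemma backward_point:
  assumes atl: "holomorphic_atlas T A"
    and lc: "local_coordinate T A a W \<nu>" and sl: "sqrt_log_coordinate A X a W \<nu>"
    and FF: "(\<lambda>w. g (inv_into W \<nu> w)) has_laurent_expansion F" and odd: "odd_principal_part F"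
  shows "\<exists>K \<phi>s. (\<forall>k<K. holo_at A (\<phi>s k) a) \<and>
     (\<exists>W'. openin T W' \<and> a \<in> W' \<and> (\<forall>q\<in>W' - {a}. g q = (\<Sum>k<K. (Dop A X ^^ k) (\<phi>s k) q)))"
proof -
  obtain x where ex: "\<forall>q\<in>W. exp (x q) = X q" and sq: "\<forall>q\<in>W. (\<nu> q)\<^sup>2 = x q - x a"
    using sl unfolding sqrt_log_coordinate_def by blast
  have aW: "a \<in> W" and injW: "inj_on \<nu> W" using lc unfolding local_coordinate_def by auto
  obtain r where r0: "r > 0"
    and A1: "\<And>w. w \<in> ball 0 r \<Longrightarrow> inv_into W \<nu> w \<in> W \<and> \<nu> (inv_into W \<nu> w) = w"
    and A2: "\<And>h w. w \<in> ball 0 r - {0} \<Longrightarrow> (\<lambda>w. h (inv_into W \<nu> w)) field_differentiable (at w) \<Longrightarrow>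
        Dop A X h (inv_into W \<nu> w) = deriv (\<lambda>w. h (inv_into W \<nu> w)) w / (2 * w)"
    and A3: "\<And>h. holo_at A h a \<Longrightarrow> (\<lambda>w. h (inv_into W \<nu> w)) analytic_on {0}"
    and A4: "\<And>h. (\<lambda>w. h (inv_into W \<nu> w)) analytic_on {0} \<Longrightarrow> holo_at A h a"
    and A5: "\<And>Ov. openin T Ov \<Longrightarrow> a \<in> Ov \<Longrightarrow> eventually (\<lambda>w. inv_into W \<nu> w \<in> Ov) (nhds 0)"
    and A6: "\<And>e. e > 0 \<Longrightarrow> \<exists>W'. openin T W' \<and> a \<in> W' \<and> (\<forall>q\<in>W'. q \<in> W \<and> \<nu> q \<in> ball 0 e)"
    and p0: "\<nu> a = 0"
    apply (rule nu_picture[OF atl lc ex sq])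
    subgoal premises P for r by (rule P(1)[OF P(2-9)])
    done
  define M where "M = nat (- fls_subdegree F)"
  define ex where "ex = (\<lambda>k::nat. 1 - 2 * int k)"
  define coef where "coef = (\<lambda>k. fls_nth F (ex k))"
  define S where "S = (\<Sum>k<M. fls_const (coef (Suc k)) * fls_X_intpow (ex (Suc k)))"
  define R where "R = F - S"
  have R1: "(\<lambda>w. g (inv_into W \<nu> w) - (\<Sum>k<M. coef (Suc k) * w powi ex (Suc k))) has_laurent_expansion R"
  proof -
    have "(\<lambda>w. \<Sum>k<M. coef (Suc k) * w powi ex (Suc k)) has_laurent_expansion S"
      unfolding S_def by (intro has_laurent_expansion_sum has_laurent_expansion_cmult_left has_laurent_expansion_fps_X_power_int)
    from has_laurent_expansion_diff[OF FF this] show ?thesis by (simp add: R_def)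
  qed
  have "\<forall>n<0. fls_nth R n = 0" using regpart_sub[OF odd] unfolding R_def S_def M_def coef_def ex_def .
  hence R2: "fls_subdegree R \<ge> 0" by (intro fls_subdegree_ge0I) auto
  have rad: "fls_conv_radius R > 0" and Rev: "eventually (\<lambda>w. eval_fls R w =
      g (inv_into W \<nu> w) - (\<Sum>k<M. coef (Suc k) * w powi ex (Suc k))) (at 0)"
    using R1 by (auto simp: has_laurent_expansion_def)
  have Gan: "eval_fls R analytic_on {0}"
    by (rule analytic_on_eval_fls) (use rad R2 in \<open>auto simp: zero_ereal_def\<close>)
  define \<phi>s where "\<phi>s = (\<lambda>k. if k = 0 then (\<lambda>q. eval_fls R (\<nu> q)) else (\<lambda>q. (coef k / alph k) * \<nu> q))"
  have evr: "eventually (\<lambda>w. w \<in> ball 0 r) (nhds (0::complex))"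
    using r0 by (intro eventually_nhds_in_open) auto
  have holo: "\<forall>k<Suc M. holo_at A (\<phi>s k) a"
  proof (intro allI impI)
    fix k assume "k < Suc M"
    show "holo_at A (\<phi>s k) a"
    proof (rule A4)
      show "(\<lambda>w. \<phi>s k (inv_into W \<nu> w)) analytic_on {0}"
      proof (cases "k = 0")
        case True
        have ev: "eventually (\<lambda>w. eval_fls R w = \<phi>s k (inv_into W \<nu> w)) (nhds 0)"
          using evr by (rule eventually_mono) (use A1 True in \<open>auto simp: \<phi>s_def\<close>)
        show ?thesis using Gan analytic_at_cong[OF ev refl] by simp
      next
        case False
        have ev: "eventually (\<lambda>w. (coef k / alph k) * w = \<phi>s k (inv_into W \<nu> w)) (nhds 0)"
          using evr by (rule eventually_mono) (use A1 False in \<open>auto simp: \<phi>s_def\<close>)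
        have "(\<lambda>w. (coef k / alph k) * w) analytic_on {0}" by (intro analytic_intros)
        thus ?thesis using analytic_at_cong[OF ev refl] by simp
      qed
    qed
  qed
  have mono: "\<forall>w\<in>ball 0 r - {0}. (Dop A X ^^ Suc k) (\<phi>s (Suc k)) (inv_into W \<nu> w) = coef (Suc k) * w powi ex (Suc k)" for k
  proof -
    have "\<phi>s (Suc k) = (\<lambda>q. (coef (Suc k) / alph (Suc k)) * \<nu> q)" by (simp add: \<phi>s_def)
    moreover have "\<forall>w\<in>ball 0 r - {0}. (Dop A X ^^ Suc k) (\<lambda>q. (coef (Suc k) / alph (Suc k)) * \<nu> q) (inv_into W \<nu> w)
        = (coef (Suc k) / alph (Suc k)) * alph (Suc k) * w powi (1 - 2 * int (Suc k))"
      by (rule iter_monomial[where Pn="inv_into W \<nu>" and Dp="Dop A X" and r=r]) (use A2 A1 in auto)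
    ultimately show ?thesis using alph_nz[of "Suc k"] by (simp add: ex_def)
  qed
  have evall: "eventually (\<lambda>w. g (inv_into W \<nu> w) = (\<Sum>k<Suc M. (Dop A X ^^ k) (\<phi>s k) (inv_into W \<nu> w))) (at 0)"
  proof -
    have e2: "eventually (\<lambda>w. w \<in> ball 0 r - {0}) (at (0::complex))"
      using r0 by (intro eventually_at_in_open) auto
    show ?thesis using Rev e2
    proof eventually_elim
      case (elim w)
      have "(\<Sum>k<Suc M. (Dop A X ^^ k) (\<phi>s k) (inv_into W \<nu> w)) =
          \<phi>s 0 (inv_into W \<nu> w) + (\<Sum>k<M. (Dop A X ^^ Suc k) (\<phi>s (Suc k)) (inv_into W \<nu> w))"
        by (subst sum.lessThan_Suc_shift) simp
      also have "\<phi>s 0 (inv_into W \<nu> w) = eval_fls R w" using A1[of w] elim by (simp add: \<phi>s_def)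
      also have "(\<Sum>k<M. (Dop A X ^^ Suc k) (\<phi>s (Suc k)) (inv_into W \<nu> w)) = (\<Sum>k<M. coef (Suc k) * w powi ex (Suc k))"
        using mono elim by simp
      finally show ?case using elim by simp
    qed
  qed
  then obtain d where d: "d > 0" and dP: "\<And>w. w \<noteq> 0 \<Longrightarrow> dist w 0 < d \<Longrightarrow>
      g (inv_into W \<nu> w) = (\<Sum>k<Suc M. (Dop A X ^^ k) (\<phi>s k) (inv_into W \<nu> w))"
    unfolding eventually_at by auto
  obtain W' where W': "openin T W'" "a \<in> W'" "\<forall>q\<in>W'. q \<in> W \<and> \<nu> q \<in> ball 0 (min d r)"
    using A6[of "min d r"] d r0 by auto
  have "\<forall>q\<in>W' - {a}. g q = (\<Sum>k<Suc M. (Dop A X ^^ k) (\<phi>s k) q)"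
  proof
    fix q assume q: "q \<in> W' - {a}"
    have qW: "q \<in> W" and qb: "\<nu> q \<in> ball 0 (min d r)" using W'(3) q by auto
    have "\<nu> q \<noteq> 0" using inj_onD[OF injW, of q a] qW aW p0 q by auto
    moreover have "inv_into W \<nu> (\<nu> q) = q" using inv_into_f_f[OF injW qW] .
    ultimately show "g q = (\<Sum>k<Suc M. (Dop A X ^^ k) (\<phi>s k) q)"
      using dP[of "\<nu> q"] qb by (simp add: dist_norm)
  qed
  thus ?thesis using holo W' by blast
qed

lemma sep_finite:
  assumes H: "Hausdorff_space T" and fin: "finite P" and sub: "P \<subseteq> topspace T"
  obtains Ob where "\<forall>a\<in>P. openin T (Ob a) \<and> a \<in> Ob a" "\<forall>a\<in>P. \<forall>b\<in>P. a \<noteq> b \<longrightarrow> Ob a \<inter> Ob b = {}"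
proof -
  define Q where "Q = (\<lambda>a b UV. (a \<in> P \<and> b \<in> P \<and> a \<noteq> b) \<longrightarrow>
      (openin T (fst UV) \<and> openin T (snd UV) \<and> a \<in> fst UV \<and> b \<in> snd UV \<and> fst UV \<inter> snd UV = {}))"
  have Q: "\<exists>UV. Q a b UV" for a b
  proof (cases "a \<in> P \<and> b \<in> P \<and> a \<noteq> b")
    case True
    have aT: "a \<in> topspace T" and bT: "b \<in> topspace T" and ab: "a \<noteq> b" using True sub by auto
    obtain U V where "openin T U" "openin T V" "a \<in> U" "b \<in> V" "disjnt U V"
      using H[unfolded Hausdorff_space_def, rule_format, OF conjI[OF aT conjI[OF bT ab]]] by blast
    thus ?thesis unfolding Q_def by (intro exI[of _ "(U, V)"]) (auto simp: disjnt_def)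
  qed (auto simp: Q_def)
  have "\<forall>a. \<exists>g. \<forall>b. Q a b (g b)"
  proof
    fix a show "\<exists>g. \<forall>b. Q a b (g b)" by (rule choice, rule allI, rule Q)
  qed
  from choice[OF this] obtain SS where SS0: "\<forall>a b. Q a b (SS a b)" by blast
  have SS: "\<And>a b. a \<in> P \<Longrightarrow> b \<in> P \<Longrightarrow> a \<noteq> b \<Longrightarrow>
      openin T (fst (SS a b)) \<and> openin T (snd (SS a b)) \<and> a \<in> fst (SS a b) \<and> b \<in> snd (SS a b) \<and> fst (SS a b) \<inter> snd (SS a b) = {}"
    using SS0 unfolding Q_def by blast
  define Ob where "Ob = (\<lambda>a. (\<Inter>b\<in>P - {a}. fst (SS a b) \<inter> snd (SS b a)) \<inter> topspace T)"
  have o1: "openin T (Ob a) \<and> a \<in> Ob a" if a: "a \<in> P" for a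
  proof
    show "openin T (Ob a)" unfolding Ob_def
      by (rule openin_INT) (use fin SS a in auto)
    show "a \<in> Ob a" unfolding Ob_def using SS a sub by auto
  qed
  have o2: "Ob a \<inter> Ob b = {}" if "a \<in> P" "b \<in> P" "a \<noteq> b" for a b
  proof -
    have "Ob a \<subseteq> fst (SS a b)" using that by (auto simp: Ob_def)
    moreover have "Ob b \<subseteq> snd (SS a b)" using that by (auto simp: Ob_def)
    ultimately show ?thesis using SS[OF that] by blast
  qed
  show ?thesis by (rule that[of Ob]) (use o1 o2 in auto)
qed

lemma Dop_local:
  assumes atl: "holomorphic_atlas T A" and Ov: "openin T Ov" and eq: "\<forall>q\<in>Ov. h q = h' q"
  shows "\<forall>q\<in>Ov. Dop A X h q = Dop A X h' q"
proof
  fix q assume q: "q \<in> Ov"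
  have qT: "q \<in> topspace T" using q openin_subset[OF Ov] by blast
  obtain V \<rho> where cq: "chart_at A q = (V, \<rho>)" by (cases "chart_at A q")
  have VA: "(V, \<rho>) \<in> A" and qV: "q \<in> V" using chart_at_props[OF atl qT] cq by auto
  have cV: "complex_chart T (V, \<rho>)" using atl VA atlas_chart by blast
  have o: "open (\<rho> ` (V \<inter> Ov))" using chart_open_image[OF cV Ov] .
  have "eventually (\<lambda>z. z \<in> \<rho> ` (V \<inter> Ov)) (nhds (\<rho> q))"
    using o q qV by (intro eventually_nhds_in_open) auto
  hence ev: "eventually (\<lambda>z. (h \<circ> inv_into V \<rho>) z = (h' \<circ> inv_into V \<rho>) z) (nhds (\<rho> q))"
  proof (rule eventually_mono)
    fix z assume "z \<in> \<rho> ` (V \<inter> Ov)"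
    then obtain y where y: "y \<in> V" "y \<in> Ov" "z = \<rho> y" by auto
    have "inv_into V \<rho> z = y" using chart_inv(1)[OF cV y(1)] y(3) by simp
    thus "(h \<circ> inv_into V \<rho>) z = (h' \<circ> inv_into V \<rho>) z" using eq y(2) by simp
  qed
  have "deriv (h \<circ> inv_into V \<rho>) (\<rho> q) = deriv (h' \<circ> inv_into V \<rho>) (\<rho> q)"
    by (rule deriv_cong_ev[OF ev refl])
  thus "Dop A X h q = Dop A X h' q" by (simp add: Dop_def cq)
qed

lemma Dop_iter_local:
  assumes atl: "holomorphic_atlas T A" and Ov: "openin T Ov" and eq: "\<forall>q\<in>Ov. h q = h' q"
  shows "\<forall>q\<in>Ov. (Dop A X ^^ k) h q = (Dop A X ^^ k) h' q"
proof (induction k)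
  case 0 thus ?case using eq by simp
next
  case (Suc k)
  show ?case using Dop_local[OF atl Ov Suc.IH, of X] by simp
qed

lemma Dop_zero: "Dop A X (\<lambda>_. 0) = (\<lambda>_. 0)"
proof
  fix q
  obtain V \<rho> where cq: "chart_at A q = (V, \<rho>)" by (cases "chart_at A q")
  have "(\<lambda>_. 0::complex) \<circ> inv_into V \<rho> = (\<lambda>_. 0)" by (simp add: o_def)
  thus "Dop A X (\<lambda>_. 0) q = 0" by (simp add: Dop_def cq)
qed

lemma Dop_iter_zero: "(Dop A X ^^ k) (\<lambda>_. 0) = (\<lambda>_. 0)"
  by (induction k) (simp_all add: Dop_zero)

lemma holo_at_local:
  assumes atl: "holomorphic_atlas T A" and h: "holo_at A h a" and Ov: "openin T Ov" "a \<in> Ov"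
    and eq: "\<forall>q\<in>Ov. h q = h' q"
  shows "holo_at A h' a"
proof -
  obtain U \<phi> where UA: "(U, \<phi>) \<in> A" and aU: "a \<in> U" and an: "(h \<circ> inv_into U \<phi>) analytic_on {\<phi> a}"
    using h unfolding holo_at_def by (elim bex_pair) auto
  have cU: "complex_chart T (U, \<phi>)" using atl UA atlas_chart by blast
  have o: "open (\<phi> ` (U \<inter> Ov))" using chart_open_image[OF cU Ov(1)] .
  have "eventually (\<lambda>z. z \<in> \<phi> ` (U \<inter> Ov)) (nhds (\<phi> a))"
    using o aU Ov(2) by (intro eventually_nhds_in_open) auto
  hence ev: "eventually (\<lambda>z. (h \<circ> inv_into U \<phi>) z = (h' \<circ> inv_into U \<phi>) z) (nhds (\<phi> a))"
  proof (rule eventually_mono)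
    fix z assume "z \<in> \<phi> ` (U \<inter> Ov)"
    then obtain y where y: "y \<in> U" "y \<in> Ov" "z = \<phi> y" by auto
    have "inv_into U \<phi> z = y" using chart_inv(1)[OF cU y(1)] y(3) by simp
    thus "(h \<circ> inv_into U \<phi>) z = (h' \<circ> inv_into U \<phi>) z" using eq y(2) by simp
  qed
  have "(h' \<circ> inv_into U \<phi>) analytic_on {\<phi> a}" using an analytic_at_cong[OF ev refl] by (simp add: o_def)
  thus ?thesis unfolding holo_at_def using UA aU by (intro bexI[of _ "(U, \<phi>)"]) auto
qed

lemma holo_at_zero:
  assumes atl: "holomorphic_atlas T A" and aT: "a \<in> topspace T"
  shows "holo_at A (\<lambda>_. 0) a"
proof -
  obtain V \<rho> where cq: "chart_at A a = (V, \<rho>)" by (cases "chart_at A a")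
  have VA: "(V, \<rho>) \<in> A" and aV: "a \<in> V" using chart_at_props[OF atl aT] cq by auto
  have "((\<lambda>_. 0::complex) \<circ> inv_into V \<rho>) analytic_on {\<rho> a}" by (simp add: o_def analytic_on_const)
  thus ?thesis unfolding holo_at_def using VA aV by (intro bexI[of _ "(V, \<rho>)"]) auto
qed

theorem proposition2p7:
  fixes T :: "'a topology"
    and A :: "('a set \<times> ('a \<Rightarrow> complex)) set"
    and X g :: "'a \<Rightarrow> complex"
    and N :: nat
    and p :: "nat \<Rightarrow> 'a"
  assumes "riemann_surface T A"
    and "\<forall>q\<in>topspace T. holo_at A X q"
    and "\<forall>i\<in>{1..N}. p i \<in> topspace T \<and> X (p i) \<noteq> 0 \<and> dX_simple_zero A X (p i)"
    and "\<forall>i\<in>{1..N}. mero_at A g (p i)"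
  shows "in_Xi_hat T A X N p g \<longleftrightarrow>
    (\<forall>i\<in>{1..N}. \<forall>W \<nu>. local_coordinate T A (p i) W \<nu> \<and> sqrt_log_coordinate A X (p i) W \<nu> \<longrightarrow>
        (\<exists>F. (\<lambda>w. g (inv_into W \<nu> w)) has_laurent_expansion F \<and> odd_principal_part F))"
proof -
  have atl: "holomorphic_atlas T A" and Hs: "Hausdorff_space T"
    using assms(1) unfolding riemann_surface_def by auto
  show ?thesis
  proof
    assume L: "in_Xi_hat T A X N p g"
    then obtain m :: nat and c j f where hf: "\<forall>k<m. \<forall>i\<in>{1..N}. holo_at A (f k) (p i)"
      and hW: "\<forall>i\<in>{1..N}. \<exists>W. openin T W \<and> p i \<in> W \<and>
            (\<forall>q\<in>W - {p i}. g q = (\<Sum>k<m. c k * (Dop A X ^^ j k) (f k) q))"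
      unfolding in_Xi_hat_def by blast
    show "\<forall>i\<in>{1..N}. \<forall>W \<nu>. local_coordinate T A (p i) W \<nu> \<and> sqrt_log_coordinate A X (p i) W \<nu> \<longrightarrow>
        (\<exists>F. (\<lambda>w. g (inv_into W \<nu> w)) has_laurent_expansion F \<and> odd_principal_part F)"
    proof (intro ballI allI impI)
      fix i W \<nu> assume i: "i \<in> {1..N}" and lcsl: "local_coordinate T A (p i) W \<nu> \<and> sqrt_log_coordinate A X (p i) W \<nu>"
      obtain Wg where Wg: "openin T Wg" "p i \<in> Wg" "\<forall>q\<in>Wg - {p i}. g q = (\<Sum>k<m. c k * (Dop A X ^^ j k) (f k) q)"
        using hW i by blast
      have hfi: "\<forall>k<m. holo_at A (f k) (p i)" using hf i by blast
      show "\<exists>F. (\<lambda>w. g (inv_into W \<nu> w)) has_laurent_expansion F \<and> odd_principal_part F"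
        by (rule forward_point[OF atl conjunct1[OF lcsl] conjunct2[OF lcsl] hfi Wg])
    qed
  next
    assume R: "\<forall>i\<in>{1..N}. \<forall>W \<nu>. local_coordinate T A (p i) W \<nu> \<and> sqrt_log_coordinate A X (p i) W \<nu> \<longrightarrow>
        (\<exists>F. (\<lambda>w. g (inv_into W \<nu> w)) has_laurent_expansion F \<and> odd_principal_part F)"
    define P where "P = p ` {1..N}"
    have finP: "finite P" by (simp add: P_def)
    have Psub: "P \<subseteq> topspace T" using assms(3) by (auto simp: P_def)
    have loc: "\<exists>K \<phi>s W'. (\<forall>k<K. holo_at A (\<phi>s k) a) \<and> openin T W' \<and> a \<in> W' \<and>
        (\<forall>q\<in>W' - {a}. g q = (\<Sum>k<K. (Dop A X ^^ k) (\<phi>s k) q))" if aP: "a \<in> P" for a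
    proof -
      obtain i where i: "i \<in> {1..N}" and ai: "a = p i" using aP by (auto simp: P_def)
      have pT: "p i \<in> topspace T" and Xp: "X (p i) \<noteq> 0" and dz: "dX_simple_zero A X (p i)"
        using assms(3) i by auto
      have hX: "holo_at A X (p i)" using assms(2) pT by blast
      obtain W \<nu> where lc: "local_coordinate T A (p i) W \<nu>" and sl: "sqrt_log_coordinate A X (p i) W \<nu>"
        using construct_nu[OF atl hX Xp dz] by blast
      obtain F where F: "(\<lambda>w. g (inv_into W \<nu> w)) has_laurent_expansion F" "odd_principal_part F"
        using R i lc sl by blast
      show ?thesis using backward_point[OF atl lc sl F] ai by blast
    qed
    have "\<forall>a\<in>P. \<exists>K. \<exists>\<phi>s W'. (\<forall>k<K. holo_at A (\<phi>s k) a) \<and> openin T W' \<and> a \<in> W' \<and>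
        (\<forall>q\<in>W' - {a}. g q = (\<Sum>k<K. (Dop A X ^^ k) (\<phi>s k) q))" using loc by blast
    from bchoice[OF this] obtain Kf where "\<forall>a\<in>P. \<exists>\<phi>s W'. (\<forall>k<Kf a. holo_at A (\<phi>s k) a) \<and> openin T W' \<and> a \<in> W' \<and>
        (\<forall>q\<in>W' - {a}. g q = (\<Sum>k<Kf a. (Dop A X ^^ k) (\<phi>s k) q))" by blast
    from bchoice[OF this] obtain \<phi>f where "\<forall>a\<in>P. \<exists>W'. (\<forall>k<Kf a. holo_at A (\<phi>f a k) a) \<and> openin T W' \<and> a \<in> W' \<and>
        (\<forall>q\<in>W' - {a}. g q = (\<Sum>k<Kf a. (Dop A X ^^ k) (\<phi>f a k) q))" by blast
    from bchoice[OF this] obtain Wf where WF: "\<forall>a\<in>P. (\<forall>k<Kf a. holo_at A (\<phi>f a k) a) \<and> openin T (Wf a) \<and> a \<in> Wf a \<and>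
        (\<forall>q\<in>Wf a - {a}. g q = (\<Sum>k<Kf a. (Dop A X ^^ k) (\<phi>f a k) q))" by blast
    obtain Ob where Ob1: "\<forall>a\<in>P. openin T (Ob a) \<and> a \<in> Ob a"
      and Ob2: "\<forall>a\<in>P. \<forall>b\<in>P. a \<noteq> b \<longrightarrow> Ob a \<inter> Ob b = {}"
      using sep_finite[OF Hs finP Psub] by blast
    define K where "K = (\<Sum>a\<in>P. Kf a)"
    define sel where "sel = (\<lambda>q. SOME a. a \<in> P \<and> q \<in> Ob a)"
    define f where "f = (\<lambda>k q. if \<exists>a\<in>P. q \<in> Ob a then (if k < Kf (sel q) then \<phi>f (sel q) k q else 0) else 0)"
    have sel: "sel q = a" if "a \<in> P" "q \<in> Ob a" for a q
    proof -
      have "sel q \<in> P \<and> q \<in> Ob (sel q)" unfolding sel_def by (rule someI[of _ a]) (use that in blast)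
      thus ?thesis using Ob2 that by blast
    qed
    have fOb: "\<forall>q\<in>Ob a. (if k < Kf a then \<phi>f a k q else 0) = f k q" if "a \<in> P" for a k
      using sel[OF that] that by (auto simp: f_def)
    have KfK: "Kf a \<le> K" if "a \<in> P" for a
      unfolding K_def by (rule member_le_sum[OF that _ finP]) auto
    show "in_Xi_hat T A X N p g"
      unfolding in_Xi_hat_def
    proof (intro exI[of _ K] exI[of _ "\<lambda>_::nat. 1::complex"] exI[of _ "\<lambda>k::nat. k"] exI[of _ f] conjI allI impI ballI)
      fix k i assume k: "k < K" and i: "i \<in> {1..N}"
      define a where "a = p i"
      have aP: "a \<in> P" using i by (simp add: P_def a_def)
      have Ob: "openin T (Ob a)" "a \<in> Ob a" using Ob1 aP by auto
      have aT: "a \<in> topspace T" using aP Psub by blast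
      show "holo_at A (f k) (p i)"
      proof (cases "k < Kf a")
        case True
        have "holo_at A (\<phi>f a k) a" using WF aP True by blast
        thus ?thesis using holo_at_local[OF atl _ Ob] fOb[OF aP, of k] True by (simp add: a_def)
      next
        case False
        thus ?thesis using holo_at_local[OF atl holo_at_zero[OF atl aT] Ob] fOb[OF aP, of k] by (simp add: a_def)
      qed
    next
      fix i assume i: "i \<in> {1..N}"
      define a where "a = p i"
      have aP: "a \<in> P" using i by (simp add: P_def a_def)
      have Ob: "openin T (Ob a)" "a \<in> Ob a" using Ob1 aP by auto
      have W: "openin T (Wf a)" "a \<in> Wf a"
        and geq: "\<forall>q\<in>Wf a - {a}. g q = (\<Sum>k<Kf a. (Dop A X ^^ k) (\<phi>f a k) q)" using WF aP by auto
      have "\<forall>q\<in>Wf a \<inter> Ob a - {a}. g q = (\<Sum>k<K. 1 * (Dop A X ^^ k) (f k) q)"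
      proof
        fix q assume q: "q \<in> Wf a \<inter> Ob a - {a}"
        have tk: "(Dop A X ^^ k) (f k) q = (if k < Kf a then (Dop A X ^^ k) (\<phi>f a k) q else 0)" for k
        proof -
          have "(Dop A X ^^ k) (\<lambda>q. if k < Kf a then \<phi>f a k q else 0) q = (Dop A X ^^ k) (f k) q"
            using Dop_iter_local[OF atl Ob(1) fOb[OF aP, of k], where X=X and k=k] q by blast
          moreover have "(Dop A X ^^ k) (\<lambda>q. if k < Kf a then \<phi>f a k q else 0) q =
              (if k < Kf a then (Dop A X ^^ k) (\<phi>f a k) q else 0)"
            by (cases "k < Kf a") (simp_all add: Dop_iter_zero)
          ultimately show ?thesis by simp
        qed
        have "(\<Sum>k<K. 1 * (Dop A X ^^ k) (f k) q) = (\<Sum>k<K. if k < Kf a then (Dop A X ^^ k) (\<phi>f a k) q else 0)"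
          using tk by simp
        also have "\<dots> = (\<Sum>k\<in>{k\<in>{..<K}. k < Kf a}. (Dop A X ^^ k) (\<phi>f a k) q)"
          by (rule sum.inter_filter[symmetric]) simp
        also have "{k\<in>{..<K}. k < Kf a} = {..<Kf a}" using KfK[OF aP] by auto
        finally show "g q = (\<Sum>k<K. 1 * (Dop A X ^^ k) (f k) q)" using geq q by auto
      qed
      thus "\<exists>W. openin T W \<and> p i \<in> W \<and> (\<forall>q\<in>W - {p i}. g q = (\<Sum>k<K. 1 * (Dop A X ^^ k) (f k) q))"
        using W Ob by (intro exI[of _ "Wf a \<inter> Ob a"]) (auto simp: a_def)
    qed
  qed
qed

end
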